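(* Let $\mathbf{X}\sim N(\boldsymbol{\mu},\boldsymbol{\Sigma})$ on $\mathbb{R}^d$ with $\boldsymbol{\Sigma}$ symmetric positive definite having maximum and minimum eigenvalues $\lambda_{\max},\lambda_{\min}$, and let $c\in\mathbb{R}$. Suppose $\mathbf{r},\hat{\mathbf{r}}$ are unit vectors with $\|\mathbf{r}-\hat{\mathbf{r}}\|_2\le\varepsilon_1$. Then $\Pr[\mathrm{pos}(\mathbf{r}^{\mathsf T}\mathbf{X}+c)\neq\mathrm{pos}(\hat{\mathbf{r}}^{\mathsf T}\mathbf{X}+c)]\le\varepsilon$, where $\varepsilon=\varepsilon_1\big(c_0\sqrt{\lambda_{\max}/\lambda_{\min}}+c_1\|\boldsymbol{\mu}\|_2/\sqrt{\lambda_{\min}}\big)$ for some absolute constants $c_0,c_1>0$.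
   Context: $\mathrm{pos}(a):=1$ if $a>0$ and $0$ otherwise. *)

theory Defs
  imports "HOL-Probability.Probability"
begin

text \<open>Vectors in R^d are functions nat => real (only coordinates i < d matter);
  d x d matrices are functions nat => nat => real (only entries i,j < d matter).
  The dimension d is an explicit natural number so that the constants c0, c1
  can be chosen independently of d.\<close>

definition pos :: "real \<Rightarrow> nat" where
  "pos a = (if a > 0 then 1 else 0)"

definition dot :: "nat \<Rightarrow> (nat \<Rightarrow> real) \<Rightarrow> (nat \<Rightarrow> real) \<Rightarrow> real" where
  "dot d x y = (\<Sum>i<d. x i * y i)"

definition vnorm :: "nat \<Rightarrow> (nat \<Rightarrow> real) \<Rightarrow> real" where
  "vnorm d x = sqrt (dot d x x)"

definition mat_vec :: "nat \<Rightarrow> (nat \<Rightarrow> nat \<Rightarrow> real) \<Rightarrow> (nat \<Rightarrow> real) \<Rightarrow> (nat \<Rightarrow> real)" where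
  "mat_vec d A x = (\<lambda>i. \<Sum>j<d. A i j * x j)"

definition symmetric_mat :: "nat \<Rightarrow> (nat \<Rightarrow> nat \<Rightarrow> real) \<Rightarrow> bool" where
  "symmetric_mat d A \<longleftrightarrow> (\<forall>i<d. \<forall>j<d. A i j = A j i)"

definition pos_def_mat :: "nat \<Rightarrow> (nat \<Rightarrow> nat \<Rightarrow> real) \<Rightarrow> bool" where
  "pos_def_mat d A \<longleftrightarrow> (\<forall>x. (\<exists>i<d. x i \<noteq> 0) \<longrightarrow> dot d x (mat_vec d A x) > 0)"

definition det_mat :: "nat \<Rightarrow> (nat \<Rightarrow> nat \<Rightarrow> real) \<Rightarrow> real" where
  "det_mat d A = (\<Sum>p\<in>{p. p permutes {..<d}}. of_int (sign p) * (\<Prod>i<d. A i (p i)))"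

definition inv_mat :: "nat \<Rightarrow> (nat \<Rightarrow> nat \<Rightarrow> real) \<Rightarrow> (nat \<Rightarrow> nat \<Rightarrow> real)" where
  "inv_mat d A = (SOME B. \<forall>i<d. \<forall>j<d. (\<Sum>k<d. A i k * B k j) = (if i = j then 1 else 0))"

definition eigenvalues_mat :: "nat \<Rightarrow> (nat \<Rightarrow> nat \<Rightarrow> real) \<Rightarrow> real set" where
  "eigenvalues_mat d A = {l. \<exists>v. (\<exists>i<d. v i \<noteq> 0) \<and> (\<forall>i<d. mat_vec d A v i = l * v i)}"

definition lambda_max :: "nat \<Rightarrow> (nat \<Rightarrow> nat \<Rightarrow> real) \<Rightarrow> real" where
  "lambda_max d A = Max (eigenvalues_mat d A)"

definition lambda_min :: "nat \<Rightarrow> (nat \<Rightarrow> nat \<Rightarrow> real) \<Rightarrow> real" where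
  "lambda_min d A = Min (eigenvalues_mat d A)"

definition lebesgue_d :: "nat \<Rightarrow> (nat \<Rightarrow> real) measure" where
  "lebesgue_d d = PiM {..<d} (\<lambda>_. lborel)"

definition gauss_density :: "nat \<Rightarrow> (nat \<Rightarrow> real) \<Rightarrow> (nat \<Rightarrow> nat \<Rightarrow> real) \<Rightarrow> (nat \<Rightarrow> real) \<Rightarrow> real" where
  "gauss_density d \<mu> \<Sigma> x =
     exp (- (1/2) * dot d (\<lambda>i. x i - \<mu> i) (mat_vec d (inv_mat d \<Sigma>) (\<lambda>i. x i - \<mu> i)))
     / sqrt ((2 * pi) ^ d * det_mat d \<Sigma>)"

definition gaussian :: "nat \<Rightarrow> (nat \<Rightarrow> real) \<Rightarrow> (nat \<Rightarrow> nat \<Rightarrow> real) \<Rightarrow> (nat \<Rightarrow> real) measure" where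
  "gaussian d \<mu> \<Sigma> = density (lebesgue_d d) (\<lambda>x. ennreal (gauss_density d \<mu> \<Sigma> x))"

end

theory Submission
  imports Defs "Jordan_Normal_Form.Determinant" "Jordan_Normal_Form.Char_Poly"
begin


definition toM :: "nat \<Rightarrow> (nat \<Rightarrow> nat \<Rightarrow> real) \<Rightarrow> real Matrix.mat" where
  "toM d A = Matrix.mat d d (\<lambda>(i,j). A i j)"
definition tov :: "nat \<Rightarrow> (nat \<Rightarrow> real) \<Rightarrow> real Matrix.vec" where
  "tov d x = Matrix.vec d x"
definition mmul :: "nat \<Rightarrow> (nat \<Rightarrow> nat \<Rightarrow> real) \<Rightarrow> (nat \<Rightarrow> nat \<Rightarrow> real) \<Rightarrow> (nat \<Rightarrow> nat \<Rightarrow> real)" where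
  "mmul d A B = (\<lambda>i j. \<Sum>k<d. A i k * B k j)"
definition tr :: "(nat \<Rightarrow> nat \<Rightarrow> real) \<Rightarrow> (nat \<Rightarrow> nat \<Rightarrow> real)" where
  "tr A = (\<lambda>i j. A j i)"
definition idm :: "nat \<Rightarrow> nat \<Rightarrow> real" where
  "idm = (\<lambda>i j. if i = j then 1 else 0)"

lemma toM_carrier[simp]: "toM d A \<in> carrier_mat d d"
  by (simp add: toM_def)
lemma tov_carrier[simp]: "tov d x \<in> carrier_vec d"
  by (simp add: tov_def)
lemma toM_index[simp]: "i < d \<Longrightarrow> j < d \<Longrightarrow> toM d A $$ (i,j) = A i j"
  by (simp add: toM_def)
lemma tov_index[simp]: "i < d \<Longrightarrow> tov d x $ i = x i"
  by (simp add: tov_def)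
lemma dim_toM[simp]: "dim_row (toM d A) = d" "dim_col (toM d A) = d"
  by (auto simp: toM_def)
lemma dim_tov[simp]: "dim_vec (tov d x) = d"
  by (simp add: tov_def)

lemma toM_eq_iff: "toM d A = toM d B \<longleftrightarrow> (\<forall>i<d. \<forall>j<d. A i j = B i j)"
  by (auto simp: toM_def Matrix.mat_eq_iff)

lemma tov_eq_iff: "tov d x = tov d y \<longleftrightarrow> (\<forall>i<d. x i = y i)"
  by (auto simp: tov_def Matrix.vec_eq_iff)

lemma dot_tov: "dot d x y = tov d x \<bullet> tov d y"
  by (simp add: dot_def scalar_prod_def atLeast0LessThan)

lemma mat_vec_tov: "tov d (mat_vec d A x) = toM d A *\<^sub>v tov d x"
  by (rule eq_vecI) (auto simp: mat_vec_def scalar_prod_def atLeast0LessThan Matrix.row_def)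

lemma toM_mmul: "toM d (mmul d A B) = toM d A * toM d B"
  by (rule eq_matI) (auto simp: mmul_def scalar_prod_def atLeast0LessThan Matrix.row_def Matrix.col_def)

lemma toM_tr: "toM d (tr A) = transpose_mat (toM d A)"
  by (rule eq_matI) (auto simp: tr_def)

lemma toM_idm: "toM d idm = 1\<^sub>m d"
  by (rule eq_matI) (auto simp: idm_def)

lemma det_mat_toM: "det_mat d A = Determinant.det (toM d A)"
  by (simp add: det_mat_def Determinant.det_def atLeast0LessThan)

lemma inv_exists:
  assumes "Determinant.det (toM d A) \<noteq> 0"
  shows "\<exists>B \<in> carrier_mat d d. toM d A * B = 1\<^sub>m d \<and> B * toM d A = 1\<^sub>m d"
  using det_non_zero_imp_unit[OF toM_carrier assms, of "()"]
  by (auto simp: Units_def ring_mat_def)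

lemma inv_mat_toM:
  assumes "Determinant.det (toM d A) \<noteq> 0"
  shows "toM d A * toM d (inv_mat d A) = 1\<^sub>m d" "toM d (inv_mat d A) * toM d A = 1\<^sub>m d"
proof -
  obtain B where B: "B \<in> carrier_mat d d" "toM d A * B = 1\<^sub>m d" "B * toM d A = 1\<^sub>m d"
    using inv_exists[OF assms] by blast
  define Bf where "Bf = (\<lambda>i j. B $$ (i,j))"
  have "toM d Bf = B" using B(1) by (auto simp: Bf_def toM_def)
  then have "toM d (mmul d A Bf) = toM d idm" using B(2) by (simp add: toM_mmul toM_idm)
  then have P: "\<forall>i<d. \<forall>j<d. (\<Sum>k<d. A i k * Bf k j) = (if i = j then 1 else 0)"
    unfolding toM_eq_iff by (simp add: mmul_def idm_def)
  have "\<forall>i<d. \<forall>j<d. (\<Sum>k<d. A i k * inv_mat d A k j) = (if i = j then 1 else 0)"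
    unfolding inv_mat_def by (rule someI[of _ Bf]) (rule P)
  then have "toM d (mmul d A (inv_mat d A)) = toM d idm"
    unfolding toM_eq_iff by (simp add: mmul_def idm_def)
  then show 1: "toM d A * toM d (inv_mat d A) = 1\<^sub>m d" by (simp add: toM_mmul toM_idm)
  show "toM d (inv_mat d A) * toM d A = 1\<^sub>m d"
    by (rule mat_mult_left_right_inverse[OF toM_carrier toM_carrier 1])
qed


definition bf :: "nat \<Rightarrow> (nat \<Rightarrow> nat \<Rightarrow> real) \<Rightarrow> (nat \<Rightarrow> real) \<Rightarrow> (nat \<Rightarrow> real) \<Rightarrow> real" where
  "bf d A x y = dot d x (mat_vec d A y)"
definition sq :: "nat \<Rightarrow> (nat \<Rightarrow> real) \<Rightarrow> real" where
  "sq d x = (\<Sum>i<d. (x i)^2)"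

lemma bf_expand: "bf d A x y = (\<Sum>i<d. \<Sum>j<d. x i * A i j * y j)"
  by (simp add: bf_def dot_def mat_vec_def sum_distrib_left mult.assoc)

lemma sq_nonneg: "sq d x \<ge> 0"
  by (simp add: sq_def sum_nonneg)

lemma vnorm_sq: "vnorm d x = sqrt (sq d x)"
  by (simp add: vnorm_def dot_def sq_def power2_eq_square)

lemma dot_self_sq: "dot d x x = sq d x"
  by (simp add: dot_def sq_def power2_eq_square)

lemma bf_lin_left: "bf d A (\<lambda>i. a * x i + b * y i) z = a * bf d A x z + b * bf d A y z"
  by (simp add: bf_expand algebra_simps sum.distrib sum_distrib_left)

lemma bf_lin_right: "bf d A z (\<lambda>i. a * x i + b * y i) = a * bf d A z x + b * bf d A z y"
  by (simp add: bf_expand algebra_simps sum.distrib sum_distrib_left)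

lemma bf_sym: "symmetric_mat d A \<Longrightarrow> bf d A x y = bf d A y x"
  unfolding bf_expand symmetric_mat_def
  apply (subst sum.swap)
  apply (intro sum.cong refl)
  apply (simp add: algebra_simps)
  done

lemma bf_cong: "(\<And>i. i < d \<Longrightarrow> x i = x' i) \<Longrightarrow> (\<And>i. i < d \<Longrightarrow> y i = y' i) \<Longrightarrow> bf d A x y = bf d A x' y'"
  unfolding bf_expand by (intro sum.cong refl) auto

lemma sq_zero_iff: "sq d x = 0 \<longleftrightarrow> (\<forall>i<d. x i = 0)"
  unfolding sq_def by (subst sum_nonneg_eq_0_iff) auto

lemma sq_pos_iff: "sq d x > 0 \<longleftrightarrow> (\<exists>i<d. x i \<noteq> 0)"
  using sq_zero_iff[of d x] sq_nonneg[of d x] by force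

lemma coord_le_sq: "i < d \<Longrightarrow> (x i)^2 \<le> sq d x"
  unfolding sq_def by (rule member_le_sum) auto

lemma bf_zero_left: "(\<forall>i<d. x i = 0) \<Longrightarrow> bf d A x y = 0"
  by (simp add: bf_expand)

lemma discr:
  fixes a b c :: real
  assumes "\<And>t. a + 2 * b * t + c * t^2 \<ge> 0" "c \<ge> 0"
  shows "b^2 \<le> a * c"
proof (cases "c = 0")
  case True
  show ?thesis
  proof (rule ccontr)
    assume "\<not> ?thesis"
    then have "b \<noteq> 0" using True by auto
    have "a + 2 * b * (- (a + 1) / (2 * b)) + c * (- (a + 1) / (2 * b))^2 \<ge> 0" by (rule assms(1))
    then show False using True \<open>b \<noteq> 0\<close> by (simp add: field_simps)
  qed
next
  case False
  then have c: "c > 0" using assms(2) by auto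
  have "a + 2 * b * (- b / c) + c * (- b / c)^2 \<ge> 0" by (rule assms(1))
  then have "a - b^2 / c \<ge> 0" using c by (simp add: field_simps power2_eq_square)
  then show ?thesis using c by (simp add: field_simps)
qed

lemma psd_cs:
  assumes sym: "symmetric_mat d A" and psd: "\<And>z. bf d A z z \<ge> 0"
  shows "(bf d A x y)^2 \<le> bf d A x x * bf d A y y"
proof -
  have "\<And>t. bf d A x x + 2 * bf d A x y * t + bf d A y y * t^2 \<ge> 0"
  proof -
    fix t
    have "bf d A (\<lambda>i. 1 * x i + t * y i) (\<lambda>i. 1 * x i + t * y i) \<ge> 0" by (rule psd)
    also have "bf d A (\<lambda>i. 1 * x i + t * y i) (\<lambda>i. 1 * x i + t * y i)
       = bf d A x x + 2 * bf d A x y * t + bf d A y y * t^2"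
      unfolding bf_lin_left bf_lin_right using bf_sym[OF sym, of x y]
      by (simp add: algebra_simps power2_eq_square)
    finally show "bf d A x x + 2 * bf d A x y * t + bf d A y y * t^2 \<ge> 0" .
  qed
  from discr[OF this psd] show ?thesis by simp
qed

lemma dot_cong: "(\<And>i. i < d \<Longrightarrow> x i = x' i) \<Longrightarrow> (\<And>i. i < d \<Longrightarrow> y i = y' i) \<Longrightarrow> dot d x y = dot d x' y'"
  unfolding dot_def by (intro sum.cong refl) auto

definition rq :: "nat \<Rightarrow> (nat \<Rightarrow> nat \<Rightarrow> real) \<Rightarrow> real set" where
  "rq d A = {bf d A x x | x. sq d x = 1}"

lemma finite_eig: "finite (eigenvalues_mat d A)"
proof -
  have "eigenvalues_mat d A \<subseteq> {k. poly (char_poly (toM d A)) k = 0}"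
  proof
    fix l assume "l \<in> eigenvalues_mat d A"
    then obtain v where v: "\<exists>i<d. v i \<noteq> 0" "\<forall>i<d. mat_vec d A v i = l * v i"
      unfolding eigenvalues_mat_def by auto
    have "tov d v \<noteq> 0\<^sub>v d" using v(1) by (auto simp: tov_def Matrix.vec_eq_iff)
    moreover have "toM d A *\<^sub>v tov d v = l \<cdot>\<^sub>v tov d v"
      unfolding mat_vec_tov[symmetric] using v(2) by (intro eq_vecI) auto
    ultimately have "eigenvalue (toM d A) l"
      unfolding eigenvalue_def eigenvector_def by (intro exI[of _ "tov d v"]) auto
    then show "l \<in> {k. poly (char_poly (toM d A)) k = 0}"
      using eigenvalue_root_char_poly[OF toM_carrier] by auto
  qed
  moreover have "char_poly (toM d A) \<noteq> 0"
    using degree_monic_char_poly[OF toM_carrier[of d A]] by auto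
  ultimately show ?thesis using poly_roots_finite finite_subset by blast
qed

lemma abs_coord_le1: "sq d x = 1 \<Longrightarrow> i < d \<Longrightarrow> \<bar>x i\<bar> \<le> 1"
  using coord_le_sq[of i d x] by (simp add: abs_square_le_1)

lemma rq_nonempty: "d \<ge> 1 \<Longrightarrow> rq d A \<noteq> {}"
proof -
  assume "d \<ge> 1"
  have "sq d (\<lambda>i. if i = 0 then 1 else 0) = (\<Sum>i<d. if i = 0 then 1 else 0)"
    unfolding sq_def by (rule sum.cong) auto
  also have "\<dots> = 1" using \<open>d \<ge> 1\<close> by (simp add: sum.delta)
  finally have "sq d (\<lambda>i. if i = 0 then 1 else 0) = 1" .
  then show ?thesis unfolding rq_def by blast
qed

lemma rq_bdd: "bdd_below (rq d A)"
proof -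
  have "\<forall>r\<in>rq d A. - (\<Sum>i<d. \<Sum>j<d. \<bar>A i j\<bar>) \<le> r"
  proof
    fix r assume "r \<in> rq d A"
    then obtain x where x: "sq d x = 1" "r = bf d A x x" unfolding rq_def by auto
    have "- (\<Sum>i<d. \<Sum>j<d. \<bar>A i j\<bar>) = (\<Sum>i<d. \<Sum>j<d. - \<bar>A i j\<bar>)" by (simp add: sum_negf)
    also have "\<dots> \<le> (\<Sum>i<d. \<Sum>j<d. x i * A i j * x j)"
    proof (intro sum_mono)
      fix i j assume i: "i \<in> {..<d}" and j: "j \<in> {..<d}"
      have "\<bar>x i * A i j * x j\<bar> = \<bar>x i\<bar> * \<bar>A i j\<bar> * \<bar>x j\<bar>" by (simp add: abs_mult)
      also have "\<dots> \<le> 1 * \<bar>A i j\<bar> * 1"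
        using abs_coord_le1[OF x(1)] i j by (intro mult_mono) auto
      finally show "- \<bar>A i j\<bar> \<le> x i * A i j * x j" by linarith
    qed
    finally show "- (\<Sum>i<d. \<Sum>j<d. \<bar>A i j\<bar>) \<le> r" using x(2) by (simp add: bf_expand)
  qed
  then show ?thesis by (auto simp: bdd_below_def)
qed

lemma rq_lower:
  assumes "d \<ge> 1"
  shows "bf d A x x \<ge> Inf (rq d A) * sq d x"
proof (cases "sq d x = 0")
  case True
  have "bf d A x x = 0" using True sq_zero_iff bf_zero_left by blast
  then show ?thesis using True by simp
next
  case False
  then have s: "sq d x > 0" using sq_nonneg[of d x] by auto
  define y where "y = (\<lambda>i. x i / sqrt (sq d x))"
  have "sq d y = 1" using s
    by (simp add: y_def sq_def power_divide sum_divide_distrib[symmetric])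
  then have "bf d A y y \<in> rq d A" unfolding rq_def by auto
  then have "Inf (rq d A) \<le> bf d A y y" by (rule cInf_lower[OF _ rq_bdd])
  also have "bf d A y y = bf d A x x / sq d x"
    unfolding bf_expand y_def using s
    by (simp add: sum_divide_distrib[symmetric] field_simps real_sqrt_mult[symmetric])
  finally show ?thesis using s by (simp add: field_simps)
qed

lemma bf_shift: "bf d (\<lambda>i j. A i j - m * idm i j) x y = bf d A x y - m * dot d x y"
proof -
  have *: "(\<Sum>j<d. x i * (A i j - m * idm i j) * y j) = (\<Sum>j<d. x i * A i j * y j) - m * (x i * y i)"
    if "i < d" for i
  proof -
    have "(\<Sum>j<d. x i * (A i j - m * idm i j) * y j) = (\<Sum>j<d. x i * A i j * y j) - (\<Sum>j<d. m * (x i * idm i j * y j))"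
      by (simp add: algebra_simps sum_subtractf)
    also have "(\<Sum>j<d. m * (x i * idm i j * y j)) = (\<Sum>j<d. if i = j then m * (x i * y j) else 0)"
      by (rule sum.cong) (auto simp: idm_def)
    also have "\<dots> = m * (x i * y i)" using that by (simp add: sum.delta)
    finally show ?thesis .
  qed
  show ?thesis unfolding bf_expand dot_def
    by (simp add: * sum_subtractf sum_distrib_left)
qed


lemma sym_shift: "symmetric_mat d A \<Longrightarrow> symmetric_mat d (\<lambda>i j. A i j - m * idm i j)"
  by (auto simp: symmetric_mat_def idm_def)

lemma abs_mat_vec_le: "sq d x = 1 \<Longrightarrow> \<bar>(\<Sum>j<d. B j' j * x j)\<bar> \<le> (\<Sum>j<d. \<bar>B j' j\<bar>)"
proof -
  assume x: "sq d x = 1"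
  have "\<bar>(\<Sum>j<d. B j' j * x j)\<bar> \<le> (\<Sum>j<d. \<bar>B j' j * x j\<bar>)" by (rule sum_abs)
  also have "\<dots> \<le> (\<Sum>j<d. \<bar>B j' j\<bar>)"
  proof (rule sum_mono)
    fix j assume "j \<in> {..<d}"
    then have "\<bar>x j\<bar> \<le> 1" using abs_coord_le1[OF x] by auto
    then show "\<bar>B j' j * x j\<bar> \<le> \<bar>B j' j\<bar>"
      by (simp add: abs_mult mult_left_le)
  qed
  finally show ?thesis .
qed

lemma inf_eigen:
  assumes d: "d \<ge> 1" and sym: "symmetric_mat d A"
  shows "\<exists>v. (\<exists>i<d. v i \<noteq> 0) \<and> (\<forall>i<d. mat_vec d A v i = Inf (rq d A) * v i)"
proof -
  define m where "m = Inf (rq d A)"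
  define N where "N = (\<lambda>i j. A i j - m * idm i j)"
  have symN: "symmetric_mat d N" unfolding N_def by (rule sym_shift[OF sym])
  have bfN: "bf d N x y = bf d A x y - m * dot d x y" for x y unfolding N_def by (rule bf_shift)
  have psd: "bf d N z z \<ge> 0" for z
    using rq_lower[OF d, of A z] unfolding bfN m_def dot_self_sq by simp
  have det0: "Determinant.det (toM d N) = 0"
  proof (rule ccontr)
    assume "Determinant.det (toM d N) \<noteq> 0"
    then obtain Bi where Bi: "Bi \<in> carrier_mat d d" "toM d N * Bi = 1\<^sub>m d"
      using inv_exists by blast
    define Bf where "Bf = (\<lambda>i j. Bi $$ (i,j))"
    define K where "K = (\<Sum>i<d. \<Sum>j<d. \<bar>Bf i j\<bar>)"
    have low: "bf d A x x \<ge> m + 1 / K" if x: "sq d x = 1" for x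
    proof -
      define y where "y = (\<lambda>i. \<Sum>j<d. Bf i j * x j)"
      have ty: "tov d y = Bi *\<^sub>v tov d x"
        using Bi(1) by (intro eq_vecI) (auto simp: y_def Bf_def scalar_prod_def atLeast0LessThan Matrix.row_def)
      have "tov d (mat_vec d N y) = tov d x"
        unfolding mat_vec_tov ty using Bi
        by (simp add: assoc_mult_mat_vec[symmetric, of _ d d _ d])
      then have Ny: "\<And>i. i < d \<Longrightarrow> mat_vec d N y i = x i" unfolding tov_eq_iff by auto
      have e1: "bf d N x y = 1" unfolding bf_def
        using dot_cong[of d x x "mat_vec d N y" x] Ny x by (simp add: dot_self_sq)
      have e2: "bf d N y y = dot d y x" unfolding bf_def
        using dot_cong[of d y y "mat_vec d N y" x] Ny by simp
      have "\<bar>dot d y x\<bar> \<le> K"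
      proof -
        have "\<bar>dot d y x\<bar> \<le> (\<Sum>i<d. \<bar>y i * x i\<bar>)" unfolding dot_def by (rule sum_abs)
        also have "\<dots> \<le> (\<Sum>i<d. \<Sum>j<d. \<bar>Bf i j\<bar>)"
        proof (rule sum_mono)
          fix i assume "i \<in> {..<d}"
          then have "\<bar>x i\<bar> \<le> 1" using abs_coord_le1[OF x] by auto
          then have "\<bar>y i * x i\<bar> \<le> \<bar>y i\<bar>" by (simp add: abs_mult mult_left_le)
          also have "\<dots> \<le> (\<Sum>j<d. \<bar>Bf i j\<bar>)" unfolding y_def by (rule abs_mat_vec_le[OF x])
          finally show "\<bar>y i * x i\<bar> \<le> (\<Sum>j<d. \<bar>Bf i j\<bar>)" .
        qed
        finally show ?thesis unfolding K_def .
      qed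
      then have "bf d N y y \<le> K" using e2 by simp
      have "1 \<le> bf d N x x * bf d N y y" using psd_cs[OF symN psd, of x y] e1 by simp
      also have "\<dots> \<le> bf d N x x * K" using \<open>bf d N y y \<le> K\<close> psd[of x] by (rule mult_left_mono)
      finally have 1: "1 \<le> bf d N x x * K" .
      then have "K > 0" using psd[of x] by (smt (verit, best) mult_nonneg_nonpos)
      then have "1 / K \<le> bf d N x x" using 1 by (simp add: field_simps)
      then show ?thesis unfolding bfN dot_self_sq x by simp
    qed
    have Kp: "K > 0"
    proof -
      obtain x where "sq d x = 1" using rq_nonempty[OF d, of A] unfolding rq_def by auto
      note x = this
      show ?thesis
      proof (rule ccontr)
        assume "\<not> K > 0"
        then have "1 / K \<le> 0" by simp
        have "bf d N x x \<ge> 0" by (rule psd)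
        show False
        proof -
          define y where "y = (\<lambda>i. \<Sum>j<d. Bf i j * x j)"
          have "K \<ge> 0" unfolding K_def by (intro sum_nonneg) auto
          then have K0: "K = 0" using \<open>\<not> K > 0\<close> by simp
          then have "\<forall>i<d. \<forall>j<d. Bf i j = 0" unfolding K_def
            by (subst (asm) sum_nonneg_eq_0_iff) (auto simp: sum_nonneg_eq_0_iff)
          then have "Bi = 0\<^sub>m d d" using Bi(1) by (intro eq_matI) (auto simp: Bf_def)
          then have "toM d N * Bi = 0\<^sub>m d d" using Bi(1) by simp
          then show False using Bi(2) d
            by (metis One_nat_def Suc_le_lessD index_one_mat(1) index_zero_mat(1) zero_neq_one)
        qed
      qed
    qed
    have "m + 1 / K \<le> Inf (rq d A)"
      by (rule cInf_greatest[OF rq_nonempty[OF d]]) (auto simp: rq_def intro: low)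
    then show False using Kp unfolding m_def by simp
  qed
  then obtain v where v: "v \<in> carrier_vec d" "v \<noteq> 0\<^sub>v d" "toM d N *\<^sub>v v = 0\<^sub>v d"
    using det_0_iff_vec_prod_zero[OF toM_carrier] by blast
  define vf where "vf = (\<lambda>i. v $ i)"
  have tv: "tov d vf = v" using v(1) by (intro eq_vecI) (auto simp: vf_def)
  have nz: "\<exists>i<d. vf i \<noteq> 0"
  proof (rule ccontr)
    assume "\<not> ?thesis"
    then have "v = 0\<^sub>v d" using v(1) by (intro eq_vecI) (auto simp: vf_def)
    then show False using v(2) by simp
  qed
  have "tov d (mat_vec d N vf) = tov d (\<lambda>_. 0)" using v(3) unfolding mat_vec_tov tv
    by (intro eq_vecI) auto
  then have "\<forall>i<d. mat_vec d N vf i = 0" unfolding tov_eq_iff by simp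
  moreover have "mat_vec d N vf i = mat_vec d A vf i - m * vf i" if "i < d" for i
  proof -
    have "mat_vec d N vf i = (\<Sum>j<d. A i j * vf j) - (\<Sum>j<d. if i = j then m * vf j else 0)"
    proof -
      have "mat_vec d N vf i = (\<Sum>j<d. A i j * vf j) - (\<Sum>j<d. m * idm i j * vf j)"
        unfolding mat_vec_def N_def by (simp add: algebra_simps sum_subtractf)
      also have "(\<Sum>j<d. m * idm i j * vf j) = (\<Sum>j<d. if i = j then m * vf j else 0)"
        by (rule sum.cong) (auto simp: idm_def)
      finally show ?thesis .
    qed
    also have "\<dots> = mat_vec d A vf i - m * vf i" using that by (simp add: sum.delta mat_vec_def)
    finally show ?thesis .
  qed
  ultimately show ?thesis using nz unfolding m_def by (intro exI[of _ vf]) auto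
qed

lemma eig_ge_inf:
  assumes d: "d \<ge> 1" and l: "l \<in> eigenvalues_mat d A"
  shows "Inf (rq d A) \<le> l"
proof -
  obtain v where v: "\<exists>i<d. v i \<noteq> 0" "\<forall>i<d. mat_vec d A v i = l * v i"
    using l unfolding eigenvalues_mat_def by auto
  have "bf d A v v = dot d v (\<lambda>i. l * v i)" unfolding bf_def using v(2) by (intro dot_cong) auto
  also have "\<dots> = l * sq d v" by (simp add: dot_def sq_def sum_distrib_left power2_eq_square algebra_simps)
  finally have "Inf (rq d A) * sq d v \<le> l * sq d v" using rq_lower[OF d, of A v] by simp
  moreover have "sq d v > 0" using v(1) sq_pos_iff by auto
  ultimately show ?thesis by simp
qed

lemma lambda_min_eq:
  assumes d: "d \<ge> 1" and sym: "symmetric_mat d A"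
  shows "lambda_min d A = Inf (rq d A)"
  unfolding lambda_min_def
proof (rule Min_eqI[OF finite_eig])
  show "Inf (rq d A) \<in> eigenvalues_mat d A"
    using inf_eigen[OF d sym] unfolding eigenvalues_mat_def by auto
qed (rule eig_ge_inf[OF d])

lemma eig_neg: "eigenvalues_mat d (\<lambda>i j. - A i j) = uminus ` eigenvalues_mat d A"
proof -
  have mv: "mat_vec d (\<lambda>i j. - A i j) v i = - mat_vec d A v i" for v i
    by (simp add: mat_vec_def sum_negf)
  show ?thesis
  proof (intro equalityI subsetI)
    fix l assume "l \<in> eigenvalues_mat d (\<lambda>i j. - A i j)"
    then obtain v where v: "\<exists>i<d. v i \<noteq> 0" "\<forall>i<d. mat_vec d (\<lambda>i j. - A i j) v i = l * v i"
      unfolding eigenvalues_mat_def by auto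
    then have "- l \<in> eigenvalues_mat d A" unfolding eigenvalues_mat_def mv by (intro CollectI exI[of _ v]) auto
    then show "l \<in> uminus ` eigenvalues_mat d A" by (metis image_eqI minus_minus)
  next
    fix l assume "l \<in> uminus ` eigenvalues_mat d A"
    then obtain l' where l': "l = - l'" "l' \<in> eigenvalues_mat d A" by auto
    then obtain v where v: "\<exists>i<d. v i \<noteq> 0" "\<forall>i<d. mat_vec d A v i = l' * v i"
      unfolding eigenvalues_mat_def by auto
    then show "l \<in> eigenvalues_mat d (\<lambda>i j. - A i j)" unfolding eigenvalues_mat_def mv l'(1)
      by (intro CollectI exI[of _ v]) auto
  qed
qed

lemma spectral:
  assumes d: "d \<ge> 1" and sym: "symmetric_mat d A" and pd: "pos_def_mat d A"
  shows "lambda_min d A > 0" "lambda_min d A \<le> lambda_max d A"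
    "\<And>x. lambda_min d A * sq d x \<le> bf d A x x" "\<And>x. bf d A x x \<le> lambda_max d A * sq d x"
proof -
  define A' where "A' = (\<lambda>i j. - A i j)"
  have sym': "symmetric_mat d A'" using sym by (auto simp: symmetric_mat_def A'_def)
  have bfA': "bf d A' x y = - bf d A x y" for x y by (simp add: A'_def bf_expand sum_negf)
  have lmax: "lambda_max d A = - Inf (rq d A')"
    unfolding lambda_max_def
  proof (rule Max_eqI[OF finite_eig])
    have "Inf (rq d A') \<in> eigenvalues_mat d A'"
      using inf_eigen[OF d sym'] unfolding eigenvalues_mat_def by auto
    then show "- Inf (rq d A') \<in> eigenvalues_mat d A" unfolding A'_def eig_neg by auto
  next
    fix l assume "l \<in> eigenvalues_mat d A"
    then have "- l \<in> eigenvalues_mat d A'" unfolding A'_def eig_neg by auto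
    then show "l \<le> - Inf (rq d A')" using eig_ge_inf[OF d] by fastforce
  qed
  show lo: "lambda_min d A * sq d x \<le> bf d A x x" for x
    unfolding lambda_min_eq[OF d sym] by (rule rq_lower[OF d])
  show hi: "bf d A x x \<le> lambda_max d A * sq d x" for x
    unfolding lmax using rq_lower[OF d, of A' x] bfA' by simp
  obtain v where v: "\<exists>i<d. v i \<noteq> 0" "\<forall>i<d. mat_vec d A v i = Inf (rq d A) * v i"
    using inf_eigen[OF d sym] by blast
  have "bf d A v v = dot d v (\<lambda>i. Inf (rq d A) * v i)" unfolding bf_def using v(2) by (intro dot_cong) auto
  also have "\<dots> = Inf (rq d A) * sq d v" by (simp add: dot_def sq_def sum_distrib_left power2_eq_square algebra_simps)
  finally have "bf d A v v = lambda_min d A * sq d v" unfolding lambda_min_eq[OF d sym] .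
  moreover have "bf d A v v > 0" using pd v(1) unfolding pos_def_mat_def bf_def by auto
  moreover have "sq d v > 0" using v(1) sq_pos_iff by auto
  ultimately show "lambda_min d A > 0" by (simp add: zero_less_mult_iff)
  have "lambda_min d A * sq d v \<le> lambda_max d A * sq d v" using lo[of v] hi[of v] by simp
  then show "lambda_min d A \<le> lambda_max d A" using \<open>sq d v > 0\<close> by simp
qed


definition lmap :: "nat \<Rightarrow> (nat \<Rightarrow> nat \<Rightarrow> real) \<Rightarrow> (nat \<Rightarrow> real) \<Rightarrow> (nat \<Rightarrow> real)" where
  "lmap d M x = (\<lambda>i\<in>{..<d}. \<Sum>j<d. M i j * x j)"

lemma tov_lmap: "tov d (lmap d M x) = toM d M *\<^sub>v tov d x"
  by (rule eq_vecI) (auto simp: lmap_def scalar_prod_def atLeast0LessThan Matrix.row_def)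

lemma tov_diff: "tov d (\<lambda>i. x i - y i) = tov d x - tov d y"
  by (rule eq_vecI) auto

lemma lmap_comp: "lmap d A (lmap d B x) = lmap d (mmul d A B) x"
proof -
  have "(\<Sum>j<d. A i j * (\<Sum>k<d. B j k * x k)) = (\<Sum>k<d. (\<Sum>j<d. A i j * B j k) * x k)" for i
    by (simp add: sum_distrib_left sum_distrib_right mult.assoc) (rule sum.swap)
  then show ?thesis unfolding lmap_def mmul_def by (auto simp: restrict_def)
qed

lemma key_inv:
  fixes Mm Sm Q Q' Mi :: "real Matrix.mat"
  assumes c: "Mm \<in> carrier_mat n n" "Sm \<in> carrier_mat n n" "Q \<in> carrier_mat n n"
      "Q' \<in> carrier_mat n n" "Mi \<in> carrier_mat n n"
    and SQ: "Sm * Q = 1\<^sub>m n"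
    and Q'S: "Q' * (Mm * (Sm * transpose_mat Mm)) = 1\<^sub>m n"
    and MiM: "Mi * Mm = 1\<^sub>m n"
  shows "transpose_mat Mm * Q' * Mm = Q"
proof -
  have T: "transpose_mat Mm * transpose_mat Mi = 1\<^sub>m n"
    using transpose_mult[OF c(5) c(1)] MiM by simp
  have cT: "transpose_mat Mm \<in> carrier_mat n n" "transpose_mat Mi \<in> carrier_mat n n" using c by auto
  have e0: "transpose_mat Mm * (transpose_mat Mi * Q) = Q"
  proof -
    have "(transpose_mat Mm * transpose_mat Mi) * Q = Q" using T c by simp
    then show ?thesis using c cT by simp
  qed
  have e1: "Q' * (Mm * (Sm * (transpose_mat Mm * X))) = X" if X: "X \<in> carrier_mat n n" for X
  proof -
    have "(Q' * (Mm * (Sm * transpose_mat Mm))) * X = X" using Q'S X by simp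
    also have "(Q' * (Mm * (Sm * transpose_mat Mm))) * X = Q' * ((Mm * (Sm * transpose_mat Mm)) * X)"
      by (rule assoc_mult_mat[of _ n n _ n _ n]) (use c cT X in auto)
    also have "(Mm * (Sm * transpose_mat Mm)) * X = Mm * ((Sm * transpose_mat Mm) * X)"
      by (rule assoc_mult_mat[of _ n n _ n _ n]) (use c cT X in auto)
    also have "(Sm * transpose_mat Mm) * X = Sm * (transpose_mat Mm * X)"
      by (rule assoc_mult_mat[of _ n n _ n _ n]) (use c cT X in auto)
    finally show ?thesis .
  qed
  have "transpose_mat Mm * Q' * Mm = transpose_mat Mm * (Q' * (Mm * (Sm * Q)))"
    using SQ c cT by simp
  also have "\<dots> = transpose_mat Mm * (Q' * (Mm * (Sm * (transpose_mat Mm * (transpose_mat Mi * Q)))))"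
    using e0 by simp
  also have "\<dots> = transpose_mat Mm * (transpose_mat Mi * Q)"
    using e1[of "transpose_mat Mi * Q"] c cT by simp
  also have "\<dots> = Q" by (rule e0)
  finally show ?thesis .
qed

lemma det_congr: "Determinant.det (toM d (mmul d M (mmul d S (tr M)))) = (Determinant.det (toM d M))^2 * Determinant.det (toM d S)"
proof -
  have "Determinant.det (toM d M * (toM d S * transpose_mat (toM d M))) = Determinant.det (toM d M) * Determinant.det (toM d S * transpose_mat (toM d M))"
    by (rule det_mult[of _ d]) auto
  also have "Determinant.det (toM d S * transpose_mat (toM d M)) = Determinant.det (toM d S) * Determinant.det (transpose_mat (toM d M))"
    by (rule det_mult[of _ d]) auto
  finally show ?thesis by (simp add: toM_mmul toM_tr det_transpose[OF toM_carrier] power2_eq_square)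
qed

lemma gauss_density_transform:
  assumes dM: "Determinant.det (toM d M) \<noteq> 0" and dS: "Determinant.det (toM d S) \<noteq> 0"
  shows "\<bar>det_mat d M\<bar> * gauss_density d (lmap d M m) (mmul d M (mmul d S (tr M))) (lmap d M x)
        = gauss_density d m S x"
proof -
  define S' where "S' = mmul d M (mmul d S (tr M))"
  have dS': "Determinant.det (toM d S') \<noteq> 0" unfolding S'_def det_congr using dM dS by (simp only: mult_eq_0_iff power_eq_0_iff) simp
  obtain Mi where Mi: "Mi \<in> carrier_mat d d" "Mi * toM d M = 1\<^sub>m d" using inv_exists[OF dM] by blast
  have key: "transpose_mat (toM d M) * toM d (inv_mat d S') * toM d M = toM d (inv_mat d S)"
    apply (rule key_inv[OF toM_carrier toM_carrier toM_carrier toM_carrier Mi(1)])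
      apply (rule inv_mat_toM(1)[OF dS])
    using inv_mat_toM(2)[OF dS'] unfolding S'_def toM_mmul toM_tr apply simp
    by (rule Mi(2))
  define z where "z = tov d (\<lambda>i. x i - m i)"
  have z: "z \<in> carrier_vec d" by (simp add: z_def)
  have tz: "tov d (\<lambda>i. lmap d M x i - lmap d M m i) = toM d M *\<^sub>v z"
    unfolding tov_diff tov_lmap z_def by (rule mult_minus_distrib_mat_vec[symmetric, of _ d d]) auto
  have q: "dot d (\<lambda>i. lmap d M x i - lmap d M m i) (mat_vec d (inv_mat d S') (\<lambda>i. lmap d M x i - lmap d M m i))
     = dot d (\<lambda>i. x i - m i) (mat_vec d (inv_mat d S) (\<lambda>i. x i - m i))"
  proof -
    have "dot d (\<lambda>i. lmap d M x i - lmap d M m i) (mat_vec d (inv_mat d S') (\<lambda>i. lmap d M x i - lmap d M m i))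
       = (toM d M *\<^sub>v z) \<bullet> (toM d (inv_mat d S') *\<^sub>v (toM d M *\<^sub>v z))"
      unfolding dot_tov mat_vec_tov tz ..
    also have "\<dots> = z \<bullet> (transpose_mat (toM d M) *\<^sub>v (toM d (inv_mat d S') *\<^sub>v (toM d M *\<^sub>v z)))"
    proof -
      define w where "w = toM d (inv_mat d S') *\<^sub>v (toM d M *\<^sub>v z)"
      have w: "w \<in> carrier_vec d" unfolding w_def by (rule mult_mat_vec_carrier[OF toM_carrier mult_mat_vec_carrier[OF toM_carrier z]])
      have f1: "(transpose_mat (toM d M) *\<^sub>v w) \<bullet> z = w \<bullet> (toM d M *\<^sub>v z)"
        by (rule transpose_vec_mult_scalar[OF toM_carrier z w])
      have c1: "transpose_mat (toM d M) *\<^sub>v w \<in> carrier_vec d" "toM d M *\<^sub>v z \<in> carrier_vec d"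
         apply (rule mult_mat_vec_carrier[of _ d d]) using w apply simp_all
        by (rule mult_mat_vec_carrier[OF toM_carrier z])
      have f2: "(transpose_mat (toM d M) *\<^sub>v w) \<bullet> z = z \<bullet> (transpose_mat (toM d M) *\<^sub>v w)"
        by (rule comm_scalar_prod[OF c1(1) z])
      have f3: "(toM d M *\<^sub>v z) \<bullet> w = w \<bullet> (toM d M *\<^sub>v z)"
        by (rule comm_scalar_prod[OF c1(2) w])
      have "(toM d M *\<^sub>v z) \<bullet> w = z \<bullet> (transpose_mat (toM d M) *\<^sub>v w)"
        using f1 f2 f3 by simp
      then show ?thesis unfolding w_def .
    qed
    also have "transpose_mat (toM d M) *\<^sub>v (toM d (inv_mat d S') *\<^sub>v (toM d M *\<^sub>v z)) = toM d (inv_mat d S) *\<^sub>v z"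
    proof -
      have "(transpose_mat (toM d M) * toM d (inv_mat d S') * toM d M) *\<^sub>v z
          = transpose_mat (toM d M) *\<^sub>v (toM d (inv_mat d S') *\<^sub>v (toM d M *\<^sub>v z))"
      proof -
        have "(transpose_mat (toM d M) * toM d (inv_mat d S') * toM d M) *\<^sub>v z
          = (transpose_mat (toM d M) * toM d (inv_mat d S')) *\<^sub>v (toM d M *\<^sub>v z)"
          by (rule assoc_mult_mat_vec[of _ d d _ d]) (use z in auto)
        also have "\<dots> = transpose_mat (toM d M) *\<^sub>v (toM d (inv_mat d S') *\<^sub>v (toM d M *\<^sub>v z))"
          by (rule assoc_mult_mat_vec[of _ d d _ d]) (use z in \<open>auto intro!: mult_mat_vec_carrier toM_carrier\<close>)
        finally show ?thesis .
      qed
      then show ?thesis unfolding key by (rule sym)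
    qed
    also have "z \<bullet> (toM d (inv_mat d S) *\<^sub>v z) = dot d (\<lambda>i. x i - m i) (mat_vec d (inv_mat d S) (\<lambda>i. x i - m i))"
      unfolding dot_tov mat_vec_tov z_def ..
    finally show ?thesis .
  qed
  have dt: "det_mat d S' = (det_mat d M)^2 * det_mat d S" unfolding det_mat_toM S'_def det_congr ..
  have sq: "sqrt ((2 * pi) ^ d * det_mat d S') = \<bar>det_mat d M\<bar> * sqrt ((2 * pi) ^ d * det_mat d S)"
    unfolding dt by (simp add: real_sqrt_mult mult.left_commute)
  have nz: "\<bar>det_mat d M\<bar> \<noteq> 0" using dM det_mat_toM by simp
  have gen: "\<And>E s. \<bar>det_mat d M\<bar> * (E / (\<bar>det_mat d M\<bar> * s)) = E / s" using nz by simp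
  show ?thesis unfolding gauss_density_def S'_def[symmetric] q sq by (rule gen)
qed


lemma space_L: "space (lebesgue_d d) = PiE {..<d} (\<lambda>_. UNIV)"
  by (simp add: lebesgue_d_def space_PiM)

lemma comp_meas: "i < d \<Longrightarrow> (\<lambda>x. x i) \<in> borel_measurable (lebesgue_d d)"
  using measurable_component_singleton[of i "{..<d}" "\<lambda>_. lborel"] by (simp add: lebesgue_d_def)

lemma lin_meas: "(\<lambda>x. \<Sum>j<d. c j * x j) \<in> borel_measurable (lebesgue_d d)"
  by (intro borel_measurable_sum borel_measurable_times borel_measurable_const comp_meas) auto

lemma lmap_meas: "lmap d M \<in> measurable (lebesgue_d d) (lebesgue_d d)"
  unfolding lmap_def
  by (subst (2) lebesgue_d_def, rule measurable_restrict) (simp add: lin_meas)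

lemma gd_meas: "(\<lambda>x. gauss_density d m S x) \<in> borel_measurable (lebesgue_d d)"
proof -
  have q[measurable]: "(\<lambda>x. \<Sum>i<d. (x i - m i) * (\<Sum>j<d. inv_mat d S i j * (x j - m j))) \<in> borel_measurable (lebesgue_d d)"
    by (intro borel_measurable_sum borel_measurable_times borel_measurable_diff borel_measurable_const comp_meas) auto
  show ?thesis unfolding gauss_density_def dot_def mat_vec_def by measurable
qed

lemma psf: "product_sigma_finite (\<lambda>_::nat. lborel :: real measure)"
  by (simp add: product_sigma_finite_def sigma_finite_lborel)

lemma det_mat_almost_diag:
  assumes "\<And>i j. i < d \<Longrightarrow> j < d \<Longrightarrow> i \<noteq> j \<Longrightarrow> i \<noteq> k \<Longrightarrow> A i j = 0"
  shows "det_mat d A = (\<Prod>i<d. A i i)"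
proof -
  let ?P = "{p. p permutes {..<d}}"
  let ?t = "\<lambda>p. of_int (sign p) * (\<Prod>i<d. A i (p i)) :: real"
  have fin: "finite ?P" by (rule finite_permutations) simp
  have z: "?t p = 0" if p: "p \<in> ?P - {id}" for p
  proof -
    have pp: "p permutes {..<d}" "p \<noteq> id" using p by auto
    then obtain i where i: "p i \<noteq> i" by (metis eq_id_iff)
    then have id: "i < d" using pp(1) unfolding permutes_def by auto
    have "\<exists>j<d. p j \<noteq> j \<and> j \<noteq> k"
    proof (cases "i = k")
      case False then show ?thesis using i id by auto
    next
      case True
      let ?j = "p k"
      have "?j < d" using permutes_in_image[OF pp(1)] id True by auto
      moreover have "?j \<noteq> k" using i True by auto
      moreover have "p ?j \<noteq> ?j"
      proof
        assume "p ?j = ?j"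
        then have "p ?j = p k" by simp
        then have "?j = k" using permutes_inj[OF pp(1)] by (simp add: inj_eq)
        then show False using i True by simp
      qed
      ultimately show ?thesis by blast
    qed
    then obtain j where j: "j < d" "p j \<noteq> j" "j \<noteq> k" by blast
    have "p j < d" using permutes_in_image[OF pp(1)] j by auto
    then have "A j (p j) = 0" using assms j by auto
    then have "(\<Prod>i<d. A i (p i)) = 0" using j by (intro prod_zero) auto
    then show ?thesis by simp
  qed
  have "det_mat d A = sum ?t ?P" unfolding det_mat_def ..
  also have "\<dots> = ?t id + sum ?t (?P - {id})"
    by (rule sum.remove[OF fin]) (simp add: permutes_id)
  also have "sum ?t (?P - {id}) = 0" using z by (intro sum.neutral) auto
  finally show ?thesis by (simp add: sign_id)
qed

definition rowM :: "nat \<Rightarrow> nat \<Rightarrow> real \<Rightarrow> (nat \<Rightarrow> real) \<Rightarrow> (nat \<Rightarrow> nat \<Rightarrow> real)" where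
  "rowM d k a b = (\<lambda>i j. if i = k then (if j = k then a else b j) else idm i j)"

lemma det_row: "k < d \<Longrightarrow> det_mat d (rowM d k a b) = a"
proof -
  assume k: "k < d"
  have "det_mat d (rowM d k a b) = (\<Prod>i<d. rowM d k a b i i)"
    by (rule det_mat_almost_diag[where k=k]) (auto simp: rowM_def idm_def)
  also have "\<dots> = rowM d k a b k k * (\<Prod>i\<in>{..<d} - {k}. rowM d k a b i i)"
    using k by (intro prod.remove) auto
  also have "(\<Prod>i\<in>{..<d} - {k}. rowM d k a b i i) = 1"
    by (intro prod.neutral) (auto simp: rowM_def idm_def)
  finally show ?thesis by (simp add: rowM_def)
qed

lemma lmap_row:
  assumes k: "k < d" and x: "x \<in> space (lebesgue_d d)"
  shows "lmap d (rowM d k a b) x = x(k := a * x k + (\<Sum>j\<in>{..<d} - {k}. b j * x j))"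
proof
  fix i
  show "lmap d (rowM d k a b) x i = (x(k := a * x k + (\<Sum>j\<in>{..<d} - {k}. b j * x j))) i"
  proof (cases "i < d")
    case False
    then have "x i = undefined" using x by (auto simp: space_L PiE_def extensional_def)
    then show ?thesis using False k by (auto simp: lmap_def)
  next
    case True
    show ?thesis
    proof (cases "i = k")
      case True
      have "(\<Sum>j<d. rowM d k a b i j * x j) = rowM d k a b i k * x k + (\<Sum>j\<in>{..<d} - {k}. rowM d k a b i j * x j)"
        using k by (intro sum.remove) auto
      also have "(\<Sum>j\<in>{..<d} - {k}. rowM d k a b i j * x j) = (\<Sum>j\<in>{..<d} - {k}. b j * x j)"
        using True by (intro sum.cong) (auto simp: rowM_def)
      finally show ?thesis using True k by (simp add: lmap_def rowM_def)
    next
      case False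
      have "(\<Sum>j<d. rowM d k a b i j * x j) = (\<Sum>j<d. if i = j then x j else 0)"
        using False by (intro sum.cong) (auto simp: rowM_def idm_def)
      also have "\<dots> = x i" using \<open>i < d\<close> by (simp add: sum.delta)
      finally show ?thesis using False \<open>i < d\<close> by (simp add: lmap_def)
    qed
  qed
qed

lemma split_L:
  assumes k: "k < d"
  shows "lebesgue_d d = PiM (insert k ({..<d} - {k})) (\<lambda>_. lborel)"
  using k unfolding lebesgue_d_def by (metis insert_Diff lessThan_iff)

lemma cv_row:
  assumes k: "k < d" and a: "a \<noteq> 0" and g[measurable]: "g \<in> borel_measurable (lebesgue_d d)"
  shows "ennreal \<bar>a\<bar> * (\<integral>\<^sup>+x. g (lmap d (rowM d k a b) x) \<partial>lebesgue_d d) = integral\<^sup>N (lebesgue_d d) g"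
proof -
  interpret P: product_sigma_finite "\<lambda>_::nat. lborel :: real measure" by (rule psf)
  define I where "I = {..<d} - {k}"
  have I: "finite I" "k \<notin> I" by (auto simp: I_def)
  have LI: "lebesgue_d d = PiM (insert k I) (\<lambda>_. lborel)" unfolding I_def by (rule split_L[OF k])
  let ?h = "lmap d (rowM d k a b)"
  have gh: "(\<lambda>x. g (?h x)) \<in> borel_measurable (lebesgue_d d)"
    by (rule measurable_comp[OF lmap_meas g, unfolded comp_def])
  have gL: "g \<in> borel_measurable (PiM (insert k I) (\<lambda>_. lborel))" using g LI by simp
  have ghL: "(\<lambda>x. ennreal \<bar>a\<bar> * g (?h x)) \<in> borel_measurable (PiM (insert k I) (\<lambda>_. lborel))"
    using gh LI by simp
  have "ennreal \<bar>a\<bar> * (\<integral>\<^sup>+x. g (?h x) \<partial>lebesgue_d d) = (\<integral>\<^sup>+x. ennreal \<bar>a\<bar> * g (?h x) \<partial>lebesgue_d d)"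
    by (rule nn_integral_cmult[OF gh, symmetric])
  also have "\<dots> = (\<integral>\<^sup>+x. (\<integral>\<^sup>+y. ennreal \<bar>a\<bar> * g (?h (x(k := y))) \<partial>lborel) \<partial>PiM I (\<lambda>_. lborel))"
    unfolding LI by (rule P.product_nn_integral_insert[OF I ghL[unfolded LI]])
  also have "\<dots> = (\<integral>\<^sup>+x. (\<integral>\<^sup>+y. g (x(k := y)) \<partial>lborel) \<partial>PiM I (\<lambda>_. lborel))"
  proof (rule nn_integral_cong)
    fix x assume x: "x \<in> space (PiM I (\<lambda>_. lborel :: real measure))"
    define t where "t = (\<Sum>j\<in>I. b j * x j)"
    have fm: "(\<lambda>y. g (x(k := y))) \<in> borel_measurable borel"
      using measurable_comp[OF measurable_component_update[OF x I(2)] gL] by (simp add: comp_def)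
    have xk: "x(k := y) \<in> space (lebesgue_d d)" for y
      using x k unfolding space_L by (auto simp: space_PiM PiE_def extensional_def I_def)
    have hx: "?h (x(k := y)) = x(k := t + a * y)" for y
      unfolding lmap_row[OF k xk] t_def I_def[symmetric]
      by (rule ext) (auto intro!: sum.cong simp: I(2) add.commute)
    have "(\<integral>\<^sup>+y. g (x(k := y)) \<partial>lborel) = ennreal \<bar>a\<bar> * (\<integral>\<^sup>+y. g (x(k := t + a * y)) \<partial>lborel)"
      by (rule nn_integral_real_affine[OF fm a])
    also have "\<dots> = (\<integral>\<^sup>+y. ennreal \<bar>a\<bar> * g (x(k := t + a * y)) \<partial>lborel)"
      by (rule nn_integral_cmult[symmetric]) (use fm in simp)
    finally show "(\<integral>\<^sup>+y. ennreal \<bar>a\<bar> * g (?h (x(k := y))) \<partial>lborel) = (\<integral>\<^sup>+y. g (x(k := y)) \<partial>lborel)"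
      unfolding hx by simp
  qed
  also have "\<dots> = integral\<^sup>N (lebesgue_d d) g"
    unfolding LI by (rule P.product_nn_integral_insert[OF I gL, symmetric])
  finally show ?thesis .
qed


definition colM :: "nat \<Rightarrow> nat \<Rightarrow> (nat \<Rightarrow> real) \<Rightarrow> (nat \<Rightarrow> nat \<Rightarrow> real)" where
  "colM d p c = (\<lambda>i j. idm i j - (if j = p \<and> i \<noteq> p then c i else 0))"

lemma det_col: "p < d \<Longrightarrow> det_mat d (colM d p c) = 1"
proof -
  assume p: "p < d"
  have "toM d (tr (colM d p c)) = toM d (rowM d p 1 (\<lambda>j. - c j))"
    unfolding toM_eq_iff by (auto simp: tr_def colM_def rowM_def idm_def)
  then have "det_mat d (colM d p c) = det_mat d (rowM d p 1 (\<lambda>j. - c j))"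
    unfolding det_mat_toM by (metis det_transpose toM_carrier toM_tr)
  then show ?thesis using det_row[OF p] by simp
qed

lemma lmap_col:
  assumes p: "p < d" and x: "x \<in> space (lebesgue_d d)"
  shows "lmap d (colM d p c) x = (\<lambda>i\<in>{..<d}. if i = p then x p else x i - c i * x p)"
proof
  fix i
  show "lmap d (colM d p c) x i = (\<lambda>i\<in>{..<d}. if i = p then x p else x i - c i * x p) i"
  proof (cases "i < d")
    case False
    then show ?thesis by (auto simp: lmap_def)
  next
    case True
    have "(\<Sum>j<d. colM d p c i j * x j) = (\<Sum>j<d. idm i j * x j) - (\<Sum>j<d. (if j = p \<and> i \<noteq> p then c i else 0) * x j)"
      unfolding colM_def by (simp add: algebra_simps sum_subtractf)
    also have "(\<Sum>j<d. idm i j * x j) = (\<Sum>j<d. if i = j then x j else 0)"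
      by (intro sum.cong) (auto simp: idm_def)
    also have "\<dots> = x i" using True by (simp add: sum.delta)
    also have "(\<Sum>j<d. (if j = p \<and> i \<noteq> p then c i else 0) * x j) = (\<Sum>j<d. if j = p then (if i \<noteq> p then c i * x j else 0) else 0)"
      by (intro sum.cong) auto
    also have "\<dots> = (if i \<noteq> p then c i * x p else 0)" using p by (subst sum.delta) auto
    finally show ?thesis using True by (auto simp: lmap_def)
  qed
qed

lemma pre_plus: "B \<in> sets borel \<Longrightarrow> (+) (c::real) -` B \<in> sets borel"
  using measurable_sets[of "(+) c" borel borel B] by simp

lemma pim_trans:
  assumes I: "finite I"
  shows "distr (PiM I (\<lambda>_. lborel)) (PiM I (\<lambda>_. lborel)) (\<lambda>x. \<lambda>i\<in>I. t i + x i) = PiM I (\<lambda>_. lborel :: real measure)"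
proof -
  interpret P: product_sigma_finite "\<lambda>_::'a. lborel :: real measure" by (simp add: product_sigma_finite_def sigma_finite_lborel)
  have Tm: "(\<lambda>x. \<lambda>i\<in>I. t i + x i) \<in> measurable (PiM I (\<lambda>_. lborel)) (PiM I (\<lambda>_. lborel :: real measure))"
    by (rule measurable_restrict) simp
  show ?thesis
  proof (rule P.PiM_eqI[OF I])
    show "sets (distr (PiM I (\<lambda>_. lborel)) (PiM I (\<lambda>_. lborel)) (\<lambda>x. \<lambda>i\<in>I. t i + x i)) = sets (PiM I (\<lambda>_. lborel))"
      by simp
  next
    fix A assume A: "\<And>i. i \<in> I \<Longrightarrow> A i \<in> sets (lborel :: real measure)"
    have PA: "PiE I A \<in> sets (PiM I (\<lambda>_. lborel :: real measure))" using A I by (intro sets_PiM_I_finite) auto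
    have pre: "(\<lambda>x. \<lambda>i\<in>I. t i + x i) -` PiE I A \<inter> space (PiM I (\<lambda>_. lborel)) = PiE I (\<lambda>i. (+) (t i) -` A i)"
      by (auto simp: space_PiM PiE_def Pi_def extensional_def)
    have one: "emeasure lborel ((+) c -` B) = emeasure lborel B" if B: "B \<in> sets (lborel :: real measure)" for c B
    proof -
      have "emeasure (distr lborel borel ((+) c)) B = emeasure lborel ((+) c -` B \<inter> space lborel)"
        by (rule emeasure_distr) (use B in auto)
      then show ?thesis using lborel_distr_plus[of c] by simp
    qed
    have "emeasure (distr (PiM I (\<lambda>_. lborel)) (PiM I (\<lambda>_. lborel)) (\<lambda>x. \<lambda>i\<in>I. t i + x i)) (PiE I A)
        = emeasure (PiM I (\<lambda>_. lborel)) (PiE I (\<lambda>i. (+) (t i) -` A i))"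
      by (subst emeasure_distr[OF Tm PA]) (simp add: pre)
    also have "\<dots> = (\<Prod>i\<in>I. emeasure lborel ((+) (t i) -` A i))"
      using A by (intro P.emeasure_PiM I) (auto intro: pre_plus)
    also have "\<dots> = (\<Prod>i\<in>I. emeasure lborel (A i))"
      using A one by (intro prod.cong) auto
    finally show "emeasure (distr (PiM I (\<lambda>_. lborel)) (PiM I (\<lambda>_. lborel)) (\<lambda>x. \<lambda>i\<in>I. t i + x i)) (PiE I A)
        = (\<Prod>i\<in>I. emeasure lborel (A i))" .
  qed
qed

lemma cv_col:
  assumes p: "p < d" and g[measurable]: "g \<in> borel_measurable (lebesgue_d d)"
  shows "(\<integral>\<^sup>+x. g (lmap d (colM d p c) x) \<partial>lebesgue_d d) = integral\<^sup>N (lebesgue_d d) g"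
proof -
  interpret P: product_sigma_finite "\<lambda>_::nat. lborel :: real measure" by (rule psf)
  define I where "I = {..<d} - {p}"
  have I: "finite I" "p \<notin> I" by (auto simp: I_def)
  have LI: "lebesgue_d d = PiM (insert p I) (\<lambda>_. lborel)" unfolding I_def by (rule split_L[OF p])
  let ?h = "lmap d (colM d p c)"
  have gh: "(\<lambda>x. g (?h x)) \<in> borel_measurable (lebesgue_d d)"
    by (rule measurable_comp[OF lmap_meas g, unfolded comp_def])
  have gL: "g \<in> borel_measurable (PiM (insert p I) (\<lambda>_. lborel))" using g LI by simp
  have ghL: "(\<lambda>x. g (?h x)) \<in> borel_measurable (PiM (insert p I) (\<lambda>_. lborel))"
    using gh LI by simp
  have "(\<integral>\<^sup>+x. g (?h x) \<partial>lebesgue_d d) = (\<integral>\<^sup>+y. (\<integral>\<^sup>+x. g (?h (x(p := y))) \<partial>PiM I (\<lambda>_. lborel)) \<partial>lborel)"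
    unfolding LI by (rule P.product_nn_integral_insert_rev[OF I ghL])
  also have "\<dots> = (\<integral>\<^sup>+y. (\<integral>\<^sup>+x. g (x(p := y)) \<partial>PiM I (\<lambda>_. lborel)) \<partial>lborel)"
  proof (rule nn_integral_cong)
    fix y :: real
    define T where "T = (\<lambda>x. \<lambda>i\<in>I. (- c i * y) + x i)"
    have Tm: "T \<in> measurable (PiM I (\<lambda>_. lborel)) (PiM I (\<lambda>_. lborel :: real measure))"
      unfolding T_def by (rule measurable_restrict) simp
    have Gm: "(\<lambda>x. g (x(p := y))) \<in> borel_measurable (PiM I (\<lambda>_. lborel))"
    proof -
      have "(\<lambda>x. x(p := y)) \<in> measurable (PiM I (\<lambda>_. lborel)) (PiM (insert p I) (\<lambda>_. lborel :: real measure))"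
        by (rule measurable_fun_upd[where J=I]) auto
      then show ?thesis using gL by (simp add: measurable_comp[unfolded comp_def])
    qed
    have hx: "?h (x(p := y)) = (T x)(p := y)" if x: "x \<in> space (PiM I (\<lambda>_. lborel :: real measure))" for x
    proof -
      have xk: "x(p := y) \<in> space (lebesgue_d d)"
        using x p unfolding space_L by (auto simp: space_PiM PiE_def extensional_def I_def)
      show ?thesis unfolding lmap_col[OF p xk] T_def
        using x p by (auto simp: I_def space_PiM PiE_def extensional_def fun_eq_iff)
    qed
    have "(\<integral>\<^sup>+x. g (?h (x(p := y))) \<partial>PiM I (\<lambda>_. lborel)) = (\<integral>\<^sup>+x. g ((T x)(p := y)) \<partial>PiM I (\<lambda>_. lborel))"
      by (rule nn_integral_cong) (simp add: hx)
    also have "\<dots> = (\<integral>\<^sup>+x. g (x(p := y)) \<partial>distr (PiM I (\<lambda>_. lborel)) (PiM I (\<lambda>_. lborel)) T)"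
      by (rule nn_integral_distr[OF Tm, symmetric]) (simp add: Gm)
    also have "distr (PiM I (\<lambda>_. lborel)) (PiM I (\<lambda>_. lborel)) T = PiM I (\<lambda>_. lborel)"
      unfolding T_def by (rule pim_trans[OF I(1)])
    finally show "(\<integral>\<^sup>+x. g (?h (x(p := y))) \<partial>PiM I (\<lambda>_. lborel)) = (\<integral>\<^sup>+x. g (x(p := y)) \<partial>PiM I (\<lambda>_. lborel))" .
  qed
  also have "\<dots> = integral\<^sup>N (lebesgue_d d) g"
    unfolding LI by (rule P.product_nn_integral_insert_rev[OF I gL, symmetric])
  finally show ?thesis .
qed

definition good :: "nat \<Rightarrow> (nat \<Rightarrow> nat \<Rightarrow> real) \<Rightarrow> bool" where
  "good d M \<longleftrightarrow> det_mat d M \<noteq> 0 \<and> (\<forall>g \<in> borel_measurable (lebesgue_d d).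
      ennreal \<bar>det_mat d M\<bar> * (\<integral>\<^sup>+x. g (lmap d M x) \<partial>lebesgue_d d) = integral\<^sup>N (lebesgue_d d) g)"

lemma good_row: "k < d \<Longrightarrow> a \<noteq> 0 \<Longrightarrow> good d (rowM d k a b)"
  unfolding good_def det_row by (auto intro: cv_row)

lemma good_col: "p < d \<Longrightarrow> good d (colM d p c)"
  unfolding good_def det_col by (auto intro: cv_col)

lemma det_mat_mmul: "det_mat d (mmul d A B) = det_mat d A * det_mat d B"
  unfolding det_mat_toM toM_mmul by (rule det_mult) auto

lemma good_mult:
  assumes A: "good d A" and B: "good d B"
  shows "good d (mmul d A B)"
  unfolding good_def
proof (intro conjI ballI)
  show "det_mat d (mmul d A B) \<noteq> 0" using A B unfolding good_def det_mat_mmul by auto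
  fix g :: "(nat \<Rightarrow> real) \<Rightarrow> ennreal" assume g: "g \<in> borel_measurable (lebesgue_d d)"
  have g': "(\<lambda>x. g (lmap d A x)) \<in> borel_measurable (lebesgue_d d)"
    by (rule measurable_comp[OF lmap_meas g, unfolded comp_def])
  have "ennreal \<bar>det_mat d (mmul d A B)\<bar> * (\<integral>\<^sup>+x. g (lmap d (mmul d A B) x) \<partial>lebesgue_d d)
      = ennreal \<bar>det_mat d A\<bar> * (ennreal \<bar>det_mat d B\<bar> * (\<integral>\<^sup>+x. g (lmap d A (lmap d B x)) \<partial>lebesgue_d d))"
    unfolding det_mat_mmul lmap_comp abs_mult by (simp add: ennreal_mult mult.assoc)
  also have "ennreal \<bar>det_mat d B\<bar> * (\<integral>\<^sup>+x. g (lmap d A (lmap d B x)) \<partial>lebesgue_d d)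
      = (\<integral>\<^sup>+x. g (lmap d A x) \<partial>lebesgue_d d)"
  proof -
    from B have "\<forall>g \<in> borel_measurable (lebesgue_d d). ennreal \<bar>det_mat d B\<bar> * (\<integral>\<^sup>+x. g (lmap d B x) \<partial>lebesgue_d d) = integral\<^sup>N (lebesgue_d d) g"
      unfolding good_def by blast
    from bspec[OF this g'] show ?thesis by simp
  qed
  also have "ennreal \<bar>det_mat d A\<bar> * \<dots> = integral\<^sup>N (lebesgue_d d) g"
    using A g unfolding good_def by blast
  finally show "ennreal \<bar>det_mat d (mmul d A B)\<bar> * (\<integral>\<^sup>+x. g (lmap d (mmul d A B) x) \<partial>lebesgue_d d) = integral\<^sup>N (lebesgue_d d) g" .
qed

lemma lmap_idm: "x \<in> space (lebesgue_d d) \<Longrightarrow> lmap d idm x = x"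
proof
  fix i assume x: "x \<in> space (lebesgue_d d)"
  show "lmap d idm x i = x i"
  proof (cases "i < d")
    case True
    have "(\<Sum>j<d. idm i j * x j) = (\<Sum>j<d. if i = j then x j else 0)" by (intro sum.cong) (auto simp: idm_def)
    then show ?thesis using True by (simp add: lmap_def sum.delta)
  next
    case False
    then show ?thesis using x by (auto simp: lmap_def space_L PiE_def extensional_def)
  qed
qed

lemma det_idm: "det_mat d idm = 1"
  unfolding det_mat_toM toM_idm by simp

lemma good_idm: "good d idm"
  unfolding good_def det_idm
  by (auto intro!: nn_integral_cong simp: lmap_idm)


lemma sets_gaussian[simp]: "sets (gaussian d m S) = sets (lebesgue_d d)"
  by (simp add: gaussian_def)
lemma space_gaussian[simp]: "space (gaussian d m S) = space (lebesgue_d d)"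
  by (simp add: gaussian_def)

lemma gauss_distr:
  assumes g: "good d M" and dS: "Determinant.det (toM d S) \<noteq> 0"
  shows "distr (gaussian d m S) (lebesgue_d d) (lmap d M) = gaussian d (lmap d M m) (mmul d M (mmul d S (tr M)))"
proof (rule measure_eqI)
  define S' where "S' = mmul d M (mmul d S (tr M))"
  show "sets (distr (gaussian d m S) (lebesgue_d d) (lmap d M)) = sets (gaussian d (lmap d M m) (mmul d M (mmul d S (tr M))))"
    by simp
  fix A assume "A \<in> sets (distr (gaussian d m S) (lebesgue_d d) (lmap d M))"
  then have A: "A \<in> sets (lebesgue_d d)" by simp
  have hm: "lmap d M \<in> measurable (gaussian d m S) (lebesgue_d d)"
    unfolding gaussian_def by (simp add: lmap_meas)
  have f[measurable]: "(\<lambda>x. ennreal (gauss_density d m S x)) \<in> borel_measurable (lebesgue_d d)"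
    using gd_meas by measurable
  have f'[measurable]: "(\<lambda>x. ennreal (gauss_density d (lmap d M m) S' x)) \<in> borel_measurable (lebesgue_d d)"
    using gd_meas by measurable
  have indA: "(\<lambda>x. indicator A x :: ennreal) \<in> borel_measurable (lebesgue_d d)"
    using A by simp
  have G: "(\<lambda>y. ennreal (gauss_density d (lmap d M m) S' y) * indicator A y) \<in> borel_measurable (lebesgue_d d)"
    using f' indA by (rule borel_measurable_times_ennreal)
  have GM: "(\<lambda>x. ennreal (gauss_density d (lmap d M m) S' (lmap d M x)) * indicator A (lmap d M x)) \<in> borel_measurable (lebesgue_d d)"
    by (rule measurable_comp[OF lmap_meas G, unfolded comp_def])
  have pre: "lmap d M -` A \<inter> space (gaussian d m S) \<in> sets (lebesgue_d d)"
    using measurable_sets[OF hm, of A] A by simp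
  have "emeasure (distr (gaussian d m S) (lebesgue_d d) (lmap d M)) A = emeasure (gaussian d m S) (lmap d M -` A \<inter> space (gaussian d m S))"
    by (rule emeasure_distr[OF hm A])
  also have "\<dots> = (\<integral>\<^sup>+x. ennreal (gauss_density d m S x) * indicator (lmap d M -` A \<inter> space (gaussian d m S)) x \<partial>lebesgue_d d)"
    unfolding gaussian_def by (rule emeasure_density[OF f]) (use pre in simp)
  also have "\<dots> = (\<integral>\<^sup>+x. ennreal (gauss_density d m S x) * indicator A (lmap d M x) \<partial>lebesgue_d d)"
    by (intro nn_integral_cong) (auto simp: indicator_def)
  also have "\<dots> = (\<integral>\<^sup>+x. ennreal \<bar>det_mat d M\<bar> * (ennreal (gauss_density d (lmap d M m) S' (lmap d M x)) * indicator A (lmap d M x)) \<partial>lebesgue_d d)"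
  proof (intro nn_integral_cong)
    fix x
    have "ennreal \<bar>det_mat d M\<bar> * ennreal (gauss_density d (lmap d M m) S' (lmap d M x)) = ennreal (gauss_density d m S x)"
    proof -
      have dM: "Determinant.det (toM d M) \<noteq> 0" using g unfolding good_def det_mat_toM by simp
      have "ennreal \<bar>det_mat d M\<bar> * ennreal (gauss_density d (lmap d M m) S' (lmap d M x))
          = ennreal (\<bar>det_mat d M\<bar> * gauss_density d (lmap d M m) S' (lmap d M x))"
        by (rule ennreal_mult'[symmetric]) simp
      also have "\<bar>det_mat d M\<bar> * gauss_density d (lmap d M m) S' (lmap d M x) = gauss_density d m S x"
        unfolding S'_def by (rule gauss_density_transform[OF dM dS])
      finally show ?thesis .
    qed
    then show "ennreal (gauss_density d m S x) * indicator A (lmap d M x) =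
      ennreal \<bar>det_mat d M\<bar> * (ennreal (gauss_density d (lmap d M m) S' (lmap d M x)) * indicator A (lmap d M x))"
      by (simp add: mult.assoc[symmetric])
  qed
  also have "\<dots> = ennreal \<bar>det_mat d M\<bar> * (\<integral>\<^sup>+x. ennreal (gauss_density d (lmap d M m) S' (lmap d M x)) * indicator A (lmap d M x) \<partial>lebesgue_d d)"
    by (rule nn_integral_cmult[OF GM])
  also have "\<dots> = (\<integral>\<^sup>+y. ennreal (gauss_density d (lmap d M m) S' y) * indicator A y \<partial>lebesgue_d d)"
    using g G unfolding good_def by auto
  also have "\<dots> = emeasure (gaussian d (lmap d M m) S') A"
    unfolding gaussian_def by (rule emeasure_density[OF f' A, symmetric])
  finally show "emeasure (distr (gaussian d m S) (lebesgue_d d) (lmap d M)) A = emeasure (gaussian d (lmap d M m) (mmul d M (mmul d S (tr M)))) A"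
    unfolding S'_def .
qed


lemma sqrt_prod: "finite A \<Longrightarrow> sqrt (prod f A) = (\<Prod>i\<in>A. sqrt (f i))"
  by (induction A rule: finite_induct) (auto simp: real_sqrt_mult)

lemma inv_mat_diag:
  assumes diag: "\<forall>i<d. \<forall>j<d. i \<noteq> j \<longrightarrow> S i j = 0" and pos: "\<forall>i<d. S i i > 0"
  shows "\<forall>i<d. \<forall>j<d. inv_mat d S i j = (if i = j then 1 / S i i else 0)"
proof -
  define D where "D = (\<lambda>i j. if i = j then 1 / S i i else 0 :: real)"
  have det: "det_mat d S = (\<Prod>i<d. S i i)"
    by (rule det_mat_almost_diag[where k=0]) (use diag in auto)
  have "det_mat d S \<noteq> 0" unfolding det using pos by (simp add: prod_zero_iff) fastforce
  then have dS: "Determinant.det (toM d S) \<noteq> 0" using det_mat_toM by simp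
  have SD: "toM d S * toM d D = 1\<^sub>m d"
  proof -
    have "toM d (mmul d S D) = toM d idm"
      unfolding toM_eq_iff
    proof (intro allI impI)
      fix i j assume ij: "i < d" "j < d"
      have "mmul d S D i j = (\<Sum>k<d. if k = j then S i k * D k j else 0)"
        unfolding mmul_def using diag ij by (intro sum.cong) (auto simp: D_def)
      also have "\<dots> = S i j * D j j" using ij by (simp add: sum.delta)
      also have "\<dots> = idm i j" using diag pos ij by (auto simp: D_def idm_def)
      finally show "mmul d S D i j = idm i j" .
    qed
    then show ?thesis by (simp add: toM_mmul toM_idm)
  qed
  have "toM d (inv_mat d S) = toM d (inv_mat d S) * (toM d S * toM d D)" using SD by simp
  also have "\<dots> = (toM d (inv_mat d S) * toM d S) * toM d D" by (rule assoc_mult_mat[symmetric]) auto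
  also have "\<dots> = toM d D" using inv_mat_toM(2)[OF dS] by simp
  finally show ?thesis unfolding toM_eq_iff D_def by simp
qed

lemma gauss_density_diag:
  assumes diag: "\<forall>i<d. \<forall>j<d. i \<noteq> j \<longrightarrow> S i j = 0" and pos: "\<forall>i<d. S i i > 0"
  shows "gauss_density d m S x = (\<Prod>i<d. normal_density (m i) (sqrt (S i i)) (x i))"
proof -
  have det: "det_mat d S = (\<Prod>i<d. S i i)"
    by (rule det_mat_almost_diag[where k=0]) (use diag in auto)
  note iv = inv_mat_diag[OF diag pos]
  have q: "dot d (\<lambda>i. x i - m i) (mat_vec d (inv_mat d S) (\<lambda>i. x i - m i)) = (\<Sum>i<d. (x i - m i)^2 / S i i)"
    unfolding dot_def mat_vec_def
  proof (intro sum.cong refl)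
    fix i assume i: "i \<in> {..<d}"
    have "(\<Sum>j<d. inv_mat d S i j * (x j - m j)) = (\<Sum>j<d. if i = j then (x j - m j) / S i i else 0)"
      using iv i by (intro sum.cong) auto
    also have "\<dots> = (x i - m i) / S i i" using i by (simp add: sum.delta)
    finally show "(x i - m i) * (\<Sum>j<d. inv_mat d S i j * (x j - m j)) = (x i - m i)^2 / S i i"
      by (simp add: power2_eq_square)
  qed
  have sq: "sqrt ((2 * pi) ^ d * det_mat d S) = (\<Prod>i<d. sqrt (2 * pi * (sqrt (S i i))^2))"
  proof -
    have "(2 * pi) ^ d * det_mat d S = (\<Prod>i<d. 2 * pi * (sqrt (S i i))^2)"
    proof -
      have "(\<Prod>i<d. S i i) = (\<Prod>i<d. (sqrt (S i i))^2)" using pos by (intro prod.cong) auto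
      then show ?thesis unfolding det by (simp add: prod.distrib)
    qed
    then show ?thesis by (simp add: sqrt_prod)
  qed
  have "(\<Prod>i<d. normal_density (m i) (sqrt (S i i)) (x i))
      = (\<Prod>i<d. 1 / sqrt (2 * pi * (sqrt (S i i))^2)) * (\<Prod>i<d. exp (- (x i - m i)\<^sup>2 / (2 * (sqrt (S i i))^2)))"
    unfolding normal_density_def by (rule prod.distrib)
  also have "(\<Prod>i<d. exp (- (x i - m i)\<^sup>2 / (2 * (sqrt (S i i))^2))) = exp (\<Sum>i<d. - (x i - m i)\<^sup>2 / (2 * (sqrt (S i i))^2))"
    by (simp add: exp_sum)
  also have "(\<Sum>i<d. - (x i - m i)\<^sup>2 / (2 * (sqrt (S i i))^2)) = - (1/2) * (\<Sum>i<d. (x i - m i)^2 / S i i)"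
  proof -
    have "(\<Sum>i<d. - (x i - m i)\<^sup>2 / (2 * (sqrt (S i i))^2)) = (\<Sum>i<d. - (1/2) * ((x i - m i)^2 / S i i))"
      using pos by (intro sum.cong) auto
    then show ?thesis by (simp add: sum_distrib_left)
  qed
  also have "(\<Prod>i<d. 1 / sqrt (2 * pi * (sqrt (S i i))^2)) = 1 / sqrt ((2 * pi) ^ d * det_mat d S)"
    unfolding sq by (simp add: prod_dividef)
  finally show ?thesis unfolding gauss_density_def q by simp
qed


lemma prod_indicator_ennreal:
  "finite I \<Longrightarrow> (\<Prod>i\<in>I. indicator (A i) (x i) :: ennreal) = (if \<forall>i\<in>I. x i \<in> A i then 1 else 0)"
proof (cases "\<forall>i\<in>I. x i \<in> A i")
  case True
  then show ?thesis by (simp add: indicator_def)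
next
  case False
  then obtain i where "i \<in> I" "x i \<notin> A i" by auto
  moreover assume "finite I"
  ultimately show ?thesis using False by (subst prod_zero) (auto simp: indicator_def intro!: bexI[of _ i])
qed

lemma gaussian_diag:
  assumes diag: "\<forall>i<d. \<forall>j<d. i \<noteq> j \<longrightarrow> S i j = 0" and pos: "\<forall>i<d. S i i > 0"
  shows "gaussian d m S = PiM {..<d} (\<lambda>i. density lborel (normal_density (m i) (sqrt (S i i))))"
proof -
  define N where "N i = density lborel (normal_density (m i) (if i < d then sqrt (S i i) else 1))" for i
  have sN: "prob_space (N i)" for i
    unfolding N_def using pos by (intro prob_space_normal_density) auto
  interpret N: product_prob_space N by (intro product_prob_spaceI sN)
  have P1: "PiM {..<d} (\<lambda>i. density lborel (normal_density (m i) (sqrt (S i i)))) = PiM {..<d} N"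
    by (rule PiM_cong) (auto simp: N_def)
  define F where "F x = ennreal (\<Prod>i<d. normal_density (m i) (sqrt (S i i)) (x i))" for x :: "nat \<Rightarrow> real"
  have G: "gaussian d m S = density (lebesgue_d d) F"
    unfolding gaussian_def F_def gauss_density_diag[OF diag pos] ..
  have Fm: "F \<in> borel_measurable (lebesgue_d d)"
    unfolding F_def by (intro measurable_compose[OF _ measurable_ennreal] borel_measurable_prod
        measurable_compose[OF comp_meas]) auto
  have "density (lebesgue_d d) F = PiM {..<d} N"
  proof (rule N.PiM_eqI)
    show "finite {..<d}" by simp
    show "sets (density (lebesgue_d d) F) = sets (PiM {..<d} N)"
      by (simp add: lebesgue_d_def N_def cong: sets_PiM_cong)
  next
    fix A assume A: "\<And>i. i \<in> {..<d} \<Longrightarrow> A i \<in> sets (N i)"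
    then have Ab: "\<And>i. i \<in> {..<d} \<Longrightarrow> A i \<in> sets borel" by (simp add: N_def)
    interpret P: product_sigma_finite "\<lambda>_::nat. lborel :: real measure" by (rule psf)
    have PA: "PiE {..<d} A \<in> sets (lebesgue_d d)"
      unfolding lebesgue_d_def using Ab by (intro sets_PiM_I_finite) auto
    have "emeasure (density (lebesgue_d d) F) (PiE {..<d} A) = (\<integral>\<^sup>+x. F x * indicator (PiE {..<d} A) x \<partial>lebesgue_d d)"
      by (rule emeasure_density[OF Fm PA])
    also have "\<dots> = (\<integral>\<^sup>+x. (\<Prod>i<d. ennreal (normal_density (m i) (sqrt (S i i)) (x i)) * indicator (A i) (x i)) \<partial>lebesgue_d d)"
    proof (rule nn_integral_cong)
      fix x assume x: "x \<in> space (lebesgue_d d)"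
      have "F x = (\<Prod>i<d. ennreal (normal_density (m i) (sqrt (S i i)) (x i)))"
        unfolding F_def by (rule prod_ennreal[symmetric]) simp
      moreover have "indicator (PiE {..<d} A) x = (\<Prod>i<d. indicator (A i) (x i) :: ennreal)"
        using x by (subst prod_indicator_ennreal) (auto simp: space_L PiE_def indicator_def)
      ultimately show "F x * indicator (PiE {..<d} A) x = (\<Prod>i<d. ennreal (normal_density (m i) (sqrt (S i i)) (x i)) * indicator (A i) (x i))"
        by (simp add: prod.distrib)
    qed
    also have "\<dots> = (\<Prod>i<d. \<integral>\<^sup>+y. ennreal (normal_density (m i) (sqrt (S i i)) y) * indicator (A i) y \<partial>lborel)"
      unfolding lebesgue_d_def
      by (rule P.product_nn_integral_prod) (use Ab in auto)
    also have "\<dots> = (\<Prod>i<d. emeasure (N i) (A i))"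
    proof (rule prod.cong[OF refl])
      fix i assume i: "i \<in> {..<d}"
      show "(\<integral>\<^sup>+y. ennreal (normal_density (m i) (sqrt (S i i)) y) * indicator (A i) y \<partial>lborel) = emeasure (N i) (A i)"
        unfolding N_def using i Ab[OF i] by (subst emeasure_density) auto
    qed
    finally show "emeasure (density (lebesgue_d d) F) (PiE {..<d} A) = (\<Prod>i<d. emeasure (N i) (A i))" .
  qed
  then show ?thesis using G P1 by simp
qed


definition congr :: "nat \<Rightarrow> (nat \<Rightarrow> nat \<Rightarrow> real) \<Rightarrow> (nat \<Rightarrow> nat \<Rightarrow> real) \<Rightarrow> (nat \<Rightarrow> nat \<Rightarrow> real)" where
  "congr d M S = mmul d M (mmul d S (tr M))"

lemma mulc[simp]: "A \<in> carrier_mat d d \<Longrightarrow> B \<in> carrier_mat d d \<Longrightarrow> A * B \<in> carrier_mat d d"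
  by (rule mult_carrier_mat)

lemma toM_congr: "toM d (congr d M S) = toM d M * (toM d S * transpose_mat (toM d M))"
  by (simp add: congr_def toM_mmul toM_tr)

lemma congr_entry: "congr d M S i j = bf d S (\<lambda>k. M i k) (\<lambda>l. M j l)"
  by (simp add: congr_def mmul_def tr_def bf_expand sum_distrib_left mult.assoc mult.left_commute)

lemma congr_mult: "i < d \<Longrightarrow> j < d \<Longrightarrow> congr d (mmul d A B) S i j = congr d A (congr d B S) i j"
proof -
  assume ij: "i < d" "j < d"
  have "toM d (congr d (mmul d A B) S) = toM d (congr d A (congr d B S))"
  proof -
    have c: "toM d A \<in> carrier_mat d d" "toM d B \<in> carrier_mat d d" "toM d S \<in> carrier_mat d d"
      "transpose_mat (toM d A) \<in> carrier_mat d d" "transpose_mat (toM d B) \<in> carrier_mat d d" by auto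
    show ?thesis unfolding toM_congr toM_mmul
      using c by (simp add: transpose_mult[of _ d d _ d] assoc_mult_mat[of _ d d _ d _ d])
  qed
  then show ?thesis using ij unfolding toM_eq_iff by auto
qed

lemma mat_vec_unit: "j < d \<Longrightarrow> mat_vec d S (idm j) = (\<lambda>k. S k j)"
proof
  fix k assume j: "j < d"
  have "mat_vec d S (idm j) k = (\<Sum>l<d. if l = j then S k l else 0)"
    unfolding mat_vec_def by (intro sum.cong) (auto simp: idm_def)
  also have "\<dots> = S k j" using j by (simp add: sum.delta)
  finally show "mat_vec d S (idm j) k = S k j" .
qed

lemma dot_unit: "i < d \<Longrightarrow> dot d (idm i) v = v i"
proof -
  assume i: "i < d"
  have "dot d (idm i) v = (\<Sum>k<d. if k = i then v k else 0)"
    unfolding dot_def by (intro sum.cong) (auto simp: idm_def)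
  also have "\<dots> = v i" using i by (simp add: sum.delta)
  finally show ?thesis .
qed

lemma bf_unit: "i < d \<Longrightarrow> j < d \<Longrightarrow> bf d S (idm i) (idm j) = S i j"
  unfolding bf_def by (simp add: mat_vec_unit dot_unit)

lemma bf_tov: "bf d A x y = tov d x \<bullet> (toM d A *\<^sub>v tov d y)"
  unfolding bf_def dot_tov mat_vec_tov ..

lemma tov_trans: "tov d (\<lambda>k. \<Sum>i<d. M i k * x i) = transpose_mat (toM d M) *\<^sub>v tov d x"
  by (rule eq_vecI) (auto simp: scalar_prod_def atLeast0LessThan Matrix.row_def mult.commute)

lemma sym_congr: "symmetric_mat d S \<Longrightarrow> symmetric_mat d (congr d M S)"
  unfolding symmetric_mat_def congr_entry using bf_sym by (metis symmetric_mat_def)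

lemma bf_congr: "bf d (congr d M S) x y = bf d S (\<lambda>k. \<Sum>i<d. M i k * x i) (\<lambda>l. \<Sum>j<d. M j l * y j)"
proof -
  have c: "toM d M \<in> carrier_mat d d" "toM d S \<in> carrier_mat d d" "transpose_mat (toM d M) \<in> carrier_mat d d"
    "tov d x \<in> carrier_vec d" "tov d y \<in> carrier_vec d" by auto
  have w: "toM d S *\<^sub>v (transpose_mat (toM d M) *\<^sub>v tov d y) \<in> carrier_vec d"
    by (rule mult_mat_vec_carrier[OF c(2) mult_mat_vec_carrier[OF c(3) c(5)]])
  have "bf d (congr d M S) x y = tov d x \<bullet> (toM d M *\<^sub>v (toM d S *\<^sub>v (transpose_mat (toM d M) *\<^sub>v tov d y)))"
    unfolding bf_tov toM_congr using c by (simp add: assoc_mult_mat_vec[of _ d d _ d])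
  also have "\<dots> = (transpose_mat (toM d M) *\<^sub>v tov d x) \<bullet> (toM d S *\<^sub>v (transpose_mat (toM d M) *\<^sub>v tov d y))"
    by (rule transpose_vec_mult_scalar[OF c(1) w c(4), symmetric])
  also have "\<dots> = bf d S (\<lambda>k. \<Sum>i<d. M i k * x i) (\<lambda>l. \<Sum>j<d. M j l * y j)"
    unfolding bf_tov tov_trans ..
  finally show ?thesis .
qed

lemma pd_congr:
  assumes pd: "pos_def_mat d S" and dM: "det_mat d M \<noteq> 0"
  shows "pos_def_mat d (congr d M S)"
  unfolding pos_def_mat_def
proof (intro allI impI)
  fix x :: "nat \<Rightarrow> real" assume x: "\<exists>i<d. x i \<noteq> 0"
  define y where "y = (\<lambda>k. \<Sum>i<d. M i k * x i)"
  have "\<exists>k<d. y k \<noteq> 0"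
  proof (rule ccontr)
    assume "\<not> ?thesis"
    then have y0: "\<forall>k<d. y k = 0" by auto
    have "tov d y = transpose_mat (toM d M) *\<^sub>v tov d x" unfolding y_def by (rule tov_trans)
    then have T0: "transpose_mat (toM d M) *\<^sub>v tov d x = 0\<^sub>v d" using y0 by (metis eq_vecI dim_tov index_zero_vec(1,2) tov_index)
    have "Determinant.det (toM d M) \<noteq> 0" using dM det_mat_toM by simp
    then obtain Mi where Mi: "Mi \<in> carrier_mat d d" "toM d M * Mi = 1\<^sub>m d" using inv_exists by blast
    have "transpose_mat Mi * transpose_mat (toM d M) = 1\<^sub>m d"
      using transpose_mult[OF toM_carrier[of d M] Mi(1)] Mi(2) by simp
    then have "tov d x = transpose_mat Mi *\<^sub>v (transpose_mat (toM d M) *\<^sub>v tov d x)"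
      using Mi(1) by (simp add: assoc_mult_mat_vec[symmetric, of _ d d _ d])
    also have "\<dots> = 0\<^sub>v d" unfolding T0 using Mi(1)
      by (intro eq_vecI) (auto simp: scalar_prod_def)
    finally show False using x by (metis index_zero_vec(1) tov_index)
  qed
  then have "bf d S y y > 0" using pd unfolding pos_def_mat_def bf_def by auto
  then show "dot d x (mat_vec d (congr d M S) x) > 0"
    using bf_congr[of d M S x x] unfolding bf_def y_def by simp
qed


lemma col_congr_entry:
  assumes ij: "i < d" "j < d" "p < d"
  shows "congr d (colM d p c) S i j = S i j - (if j \<noteq> p then c j else 0) * S i p
     - (if i \<noteq> p then c i else 0) * S p j + (if i \<noteq> p then c i else 0) * (if j \<noteq> p then c j else 0) * S p p"
proof -
  define a where "a = (if i \<noteq> p then c i else 0)"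
  define b where "b = (if j \<noteq> p then c j else 0)"
  have ri: "(\<lambda>k. colM d p c i k) = (\<lambda>k. 1 * idm i k + (- a) * idm p k)"
    by (rule ext) (auto simp: colM_def idm_def a_def)
  have rj: "(\<lambda>k. colM d p c j k) = (\<lambda>k. 1 * idm j k + (- b) * idm p k)"
    by (rule ext) (auto simp: colM_def idm_def b_def)
  have "congr d (colM d p c) S i j = S i j - b * S i p - a * S p j + a * b * S p p"
    unfolding congr_entry ri rj bf_lin_left bf_lin_right
    using ij by (simp add: bf_unit algebra_simps)
  then show ?thesis unfolding a_def b_def .
qed

definition Zs :: "nat \<Rightarrow> (nat \<Rightarrow> nat \<Rightarrow> real) \<Rightarrow> nat set" where
  "Zs d S = {p. p < d \<and> (\<forall>q<d. q \<noteq> p \<longrightarrow> S p q = 0)}"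

lemma pd_diag_pos: "pos_def_mat d S \<Longrightarrow> p < d \<Longrightarrow> S p p > 0"
proof -
  assume pd: "pos_def_mat d S" and p: "p < d"
  have "dot d (idm p) (mat_vec d S (idm p)) > 0" using pd p unfolding pos_def_mat_def
    by (metis idm_def zero_neq_one)
  then show ?thesis using p by (simp add: mat_vec_unit dot_unit)
qed

lemma congr_idm: "i < d \<Longrightarrow> j < d \<Longrightarrow> congr d idm S i j = S i j"
proof -
  assume "i < d" "j < d"
  moreover have "(\<lambda>k. idm i k) = idm i" "(\<lambda>k. idm j k) = idm j" by auto
  ultimately show ?thesis unfolding congr_entry by (simp add: bf_unit)
qed

lemma elim_main:
  "\<forall>S. symmetric_mat d S \<longrightarrow> pos_def_mat d S \<longrightarrow> P \<subseteq> {..<d} \<longrightarrow> (\<forall>p\<in>P. \<forall>q\<in>P. p \<noteq> q \<longrightarrow> S p q = 0)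
     \<longrightarrow> card ({..<d} - Zs d S) = n
     \<longrightarrow> (\<exists>M. good d M \<and> (\<forall>i<d. \<forall>j<d. i \<noteq> j \<longrightarrow> congr d M S i j = 0) \<and> (\<forall>q\<in>P. \<forall>j<d. M q j = idm q j))"
proof (induction n rule: less_induct)
  case (less n)
  show ?case
  proof (intro allI impI)
    fix S assume sym: "symmetric_mat d S" and pd: "pos_def_mat d S" and P: "P \<subseteq> {..<d}"
      and pw: "\<forall>p\<in>P. \<forall>q\<in>P. p \<noteq> q \<longrightarrow> S p q = 0" and cn: "card ({..<d} - Zs d S) = n"
    show "\<exists>M. good d M \<and> (\<forall>i<d. \<forall>j<d. i \<noteq> j \<longrightarrow> congr d M S i j = 0) \<and> (\<forall>q\<in>P. \<forall>j<d. M q j = idm q j)"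
    proof (cases "{..<d} - Zs d S = {}")
      case True
      have "\<forall>i<d. \<forall>j<d. i \<noteq> j \<longrightarrow> congr d idm S i j = 0"
      proof (intro allI impI)
        fix i j assume "i < d" "j < d" "i \<noteq> j"
        moreover then have "i \<in> Zs d S" using True by auto
        ultimately show "congr d idm S i j = 0" by (simp add: congr_idm Zs_def)
      qed
      then show ?thesis using good_idm by blast
    next
      case False
      obtain p where p: "p < d" "p \<notin> Zs d S" "\<forall>q\<in>P. q \<noteq> p \<longrightarrow> S q p = 0"
      proof (cases "\<exists>p\<in>P. p \<notin> Zs d S")
        case True
        then obtain p where "p \<in> P" "p \<notin> Zs d S" by blast
        then show ?thesis using that P pw by blast
      next
        case F: False
        obtain p where "p < d" "p \<notin> Zs d S" using False by auto
        moreover have "\<forall>q\<in>P. q \<noteq> p \<longrightarrow> S q p = 0" using F \<open>p < d\<close> by (auto simp: Zs_def)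
        ultimately show ?thesis using that by blast
      qed
      have Spp: "S p p > 0" by (rule pd_diag_pos[OF pd p(1)])
      define c where "c = (\<lambda>i. S i p / S p p)"
      define C where "C = colM d p c"
      define S' where "S' = congr d C S"
      have gC: "good d C" unfolding C_def by (rule good_col[OF p(1)])
      have sym': "symmetric_mat d S'" unfolding S'_def by (rule sym_congr[OF sym])
      have pd': "pos_def_mat d S'" unfolding S'_def C_def by (rule pd_congr[OF pd]) (simp add: det_col[OF p(1)])
      have E: "S' i j = S i j - (if j \<noteq> p then c j else 0) * S i p
         - (if i \<noteq> p then c i else 0) * S p j + (if i \<noteq> p then c i else 0) * (if j \<noteq> p then c j else 0) * S p p"
        if "i < d" "j < d" for i j
        unfolding S'_def C_def using that p(1) by (rule col_congr_entry)
      have symS: "S i j = S j i" if "i < d" "j < d" for i j using sym that unfolding symmetric_mat_def by auto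
      have symS': "S' i j = S' j i" if "i < d" "j < d" for i j using sym' that unfolding symmetric_mat_def by auto
      have pZ: "S' p q = 0" if "q < d" "q \<noteq> p" for q
        using E[OF p(1) that(1)] that Spp symS[OF p(1) that(1)] by (simp add: c_def)
      have zZ: "z \<in> Zs d S'" if z: "z \<in> Zs d S" for z
      proof -
        have zd: "z < d" and zi: "\<forall>q<d. q \<noteq> z \<longrightarrow> S z q = 0" using z by (auto simp: Zs_def)
        have zp: "z \<noteq> p" using z p(2) by auto
        have "S z p = 0" using zi zp p(1) by auto
        then have cz: "c z = 0" by (simp add: c_def)
        have "S' z q = 0" if "q < d" "q \<noteq> z" for q
          using E[OF zd that(1)] zp cz zi that \<open>S z p = 0\<close> by simp
        then show ?thesis using zd by (auto simp: Zs_def)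
      qed
      have pZs: "p \<in> Zs d S'" using pZ p(1) by (auto simp: Zs_def)
      have sub: "{..<d} - Zs d S' \<subseteq> ({..<d} - Zs d S) - {p}" using zZ pZs by auto
      have lt: "card ({..<d} - Zs d S') < n"
      proof -
        have "card ({..<d} - Zs d S') \<le> card (({..<d} - Zs d S) - {p})" by (rule card_mono[OF _ sub]) auto
        also have "\<dots> < card ({..<d} - Zs d S)" using p(1,2) by (intro card_Diff1_less) auto
        finally show ?thesis using cn by simp
      qed
      have pw': "\<forall>q\<in>P. \<forall>q'\<in>P. q \<noteq> q' \<longrightarrow> S' q q' = 0"
      proof (intro ballI impI)
        fix q q' assume q: "q \<in> P" "q' \<in> P" "q \<noteq> q'"
        have qd: "q < d" "q' < d" using q P by auto
        show "S' q q' = 0"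
        proof (cases "q = p")
          case True then show ?thesis using pZ qd q(3) by simp
        next
          case qp: False
          show ?thesis
          proof (cases "q' = p")
            case True then show ?thesis using pZ[of q] qd qp symS'[of q p] by simp
          next
            case False
            have "c q = 0" "c q' = 0" using p(3) q qp False by (auto simp: c_def)
            then show ?thesis using E[OF qd] pw q qp False by simp
          qed
        qed
      qed
      obtain M' where M': "good d M'" "\<forall>i<d. \<forall>j<d. i \<noteq> j \<longrightarrow> congr d M' S' i j = 0" "\<forall>q\<in>P. \<forall>j<d. M' q j = idm q j"
        using less.IH[OF lt] sym' pd' P pw' by blast
      define M where "M = mmul d M' C"
      have gM: "good d M" unfolding M_def by (rule good_mult[OF M'(1) gC])
      have dg: "\<forall>i<d. \<forall>j<d. i \<noteq> j \<longrightarrow> congr d M S i j = 0"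
        using M'(2) unfolding M_def S'_def by (simp add: congr_mult)
      have rows: "\<forall>q\<in>P. \<forall>j<d. M q j = idm q j"
      proof (intro ballI allI impI)
        fix q j assume q: "q \<in> P" and j: "j < d"
        have qd: "q < d" using q P by auto
        have "M q j = (\<Sum>k<d. if k = q then C k j else 0)"
          unfolding M_def mmul_def using M'(3) q by (intro sum.cong) (auto simp: idm_def)
        also have "\<dots> = C q j" using qd by (simp add: sum.delta)
        also have "\<dots> = idm q j"
        proof (cases "q = p")
          case True then show ?thesis by (simp add: C_def colM_def)
        next
          case False
          then have "c q = 0" using p(3) q by (auto simp: c_def)
          then show ?thesis by (simp add: C_def colM_def)
        qed
        finally show "M q j = idm q j" .
      qed
      show ?thesis using gM dg rows by blast
    qed
  qed
qed

lemma elim_thm: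
  assumes "symmetric_mat d S" "pos_def_mat d S" "P \<subseteq> {..<d}" "\<forall>p\<in>P. \<forall>q\<in>P. p \<noteq> q \<longrightarrow> S p q = 0"
  shows "\<exists>M. good d M \<and> (\<forall>i<d. \<forall>j<d. i \<noteq> j \<longrightarrow> congr d M S i j = 0) \<and> (\<forall>q\<in>P. \<forall>j<d. M q j = idm q j)"
  using elim_main assms by blast


lemma ival_bound:
  fixes f :: "real \<Rightarrow> real"
  assumes f[measurable]: "f \<in> borel_measurable borel" and fn: "\<And>s. f s \<ge> 0"
    and rho: "\<rho> \<ge> 0" and B: "\<And>s. \<bar>s - x0\<bar> \<le> \<rho> \<Longrightarrow> f s \<le> B"
  shows "emeasure (density lborel f) {s. \<bar>s - x0\<bar> \<le> \<rho>} \<le> ennreal (2 * \<rho> * B)"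
proof -
  have eq: "{s. \<bar>s - x0\<bar> \<le> \<rho>} = {x0 - \<rho> .. x0 + \<rho>}" by auto
  have "emeasure (density lborel f) {x0 - \<rho> .. x0 + \<rho>} = (\<integral>\<^sup>+s. ennreal (f s) * indicator {x0 - \<rho> .. x0 + \<rho>} s \<partial>lborel)"
    by (rule emeasure_density) auto
  also have "\<dots> \<le> (\<integral>\<^sup>+s. ennreal B * indicator {x0 - \<rho> .. x0 + \<rho>} s \<partial>lborel)"
    by (intro nn_integral_mono) (auto simp: indicator_def intro!: ennreal_leI B)
  also have "\<dots> = ennreal B * emeasure lborel {x0 - \<rho> .. x0 + \<rho>}"
    by (rule nn_integral_cmult_indicator) simp
  also have "\<dots> = ennreal B * ennreal (2 * \<rho>)" using rho by simp
  also have "\<dots> \<le> ennreal (2 * \<rho> * B)"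
  proof (cases "B \<ge> 0")
    case True then show ?thesis by (simp add: ennreal_mult'[symmetric] mult.commute)
  next
    case False then show ?thesis by (simp add: ennreal_neg)
  qed
  finally show ?thesis unfolding eq .
qed

lemma nd_le: "\<sigma> > 0 \<Longrightarrow> normal_density \<mu> \<sigma> s \<le> 1 / (sqrt (2 * pi) * \<sigma>)"
proof -
  assume s: "\<sigma> > 0"
  have "normal_density \<mu> \<sigma> s = 1 / (sqrt (2 * pi) * \<sigma>) * exp (- (s - \<mu>)\<^sup>2 / (2 * \<sigma>\<^sup>2))"
    using s by (simp add: normal_density_def real_sqrt_mult)
  also have "\<dots> \<le> 1 / (sqrt (2 * pi) * \<sigma>) * 1"
    using s by (intro mult_left_mono) auto
  finally show ?thesis by simp
qed

lemma nd_le_far: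
  assumes s: "\<sigma> > 0" and far: "\<bar>s - \<mu>\<bar> \<ge> r" and r: "r \<ge> 0"
  shows "normal_density \<mu> \<sigma> s \<le> exp (- r\<^sup>2 / (2 * \<sigma>\<^sup>2)) / (sqrt (2 * pi) * \<sigma>)"
proof -
  have "r\<^sup>2 \<le> (s - \<mu>)\<^sup>2" using far r by (metis abs_le_square_iff abs_of_nonneg power2_abs)
  then have "- (s - \<mu>)\<^sup>2 / (2 * \<sigma>\<^sup>2) \<le> - r\<^sup>2 / (2 * \<sigma>\<^sup>2)" using s by (simp add: divide_right_mono)
  then have "exp (- (s - \<mu>)\<^sup>2 / (2 * \<sigma>\<^sup>2)) \<le> exp (- r\<^sup>2 / (2 * \<sigma>\<^sup>2))" by simp
  then show ?thesis using s by (simp add: normal_density_def real_sqrt_mult divide_right_mono)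
qed

lemma yexp_le: "y \<ge> 0 \<Longrightarrow> y * exp (- y\<^sup>2 / 8) \<le> (2::real)"
proof -
  assume y: "y \<ge> 0"
  have "1 + y\<^sup>2 / 8 \<le> exp (y\<^sup>2 / 8)" by (rule exp_ge_add_one_self)
  moreover have "y / 2 \<le> 1 + y\<^sup>2 / 8"
  proof -
    have "0 \<le> (y - 2)\<^sup>2 + 4" by simp
    then show ?thesis by (simp add: power2_eq_square algebra_simps)
  qed
  ultimately have "y / 2 \<le> exp (y\<^sup>2 / 8)" by linarith
  then have "y \<le> 2 * exp (y\<^sup>2 / 8)" by simp
  then have "y * exp (- y\<^sup>2 / 8) \<le> 2 * exp (y\<^sup>2 / 8) * exp (- y\<^sup>2 / 8)"
    by (intro mult_right_mono) auto
  also have "\<dots> = 2" by (simp add: exp_minus[symmetric] mult.assoc exp_add[symmetric])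
  finally show ?thesis .
qed

lemma sqrt2pi: "sqrt (2 * pi) \<ge> 16 / 7"
proof -
  have "(16/7)\<^sup>2 \<le> 2 * pi" using pi_gt3 by (simp add: power2_eq_square)
  then have "sqrt ((16/7)\<^sup>2) \<le> sqrt (2 * pi)" by (rule real_sqrt_le_mono)
  then show ?thesis by simp
qed


lemma ival_sets: "{s::real. \<bar>s - x0\<bar> \<le> r} \<in> sets borel"
proof -
  have "{s::real. \<bar>s - x0\<bar> \<le> r} = {x0 - r .. x0 + r}" by auto
  then show ?thesis by simp
qed

lemma slice:
  assumes s: "\<sigma> > 0"
  shows "emeasure (density lborel (normal_density \<mu> \<sigma>)) {s. \<bar>s - \<mu> + a\<bar> \<le> \<bar>\<beta> * (s - \<mu>) + t\<bar>}
     \<le> ennreal (8 * \<bar>\<beta>\<bar> + 4 * \<bar>t\<bar> / \<sigma>)"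
proof -
  let ?N = "density lborel (normal_density \<mu> \<sigma>)"
  interpret N: prob_space ?N by (rule prob_space_normal_density[OF s])
  let ?A = "{s. \<bar>s - \<mu> + a\<bar> \<le> \<bar>\<beta> * (s - \<mu>) + t\<bar>}"
  have tpos: "4 * \<bar>t\<bar> / \<sigma> \<ge> 0" using s by simp
  show ?thesis
  proof (cases "\<bar>\<beta>\<bar> > 1/8")
    case True
    have "emeasure ?N ?A \<le> 1" by (rule N.emeasure_le_1)
    also have "(1::ennreal) \<le> ennreal (8 * \<bar>\<beta>\<bar> + 4 * \<bar>t\<bar> / \<sigma>)"
    proof -
      have "(1::real) \<le> 8 * \<bar>\<beta>\<bar> + 4 * \<bar>t\<bar> / \<sigma>" using True tpos by linarith
      then have "ennreal 1 \<le> ennreal (8 * \<bar>\<beta>\<bar> + 4 * \<bar>t\<bar> / \<sigma>)" by (rule ennreal_leI)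
      then show ?thesis by simp
    qed
    finally show ?thesis .
  next
    case False
    then have b: "\<bar>\<beta>\<bar> \<le> 1/8" by simp
    define x0 where "x0 = \<mu> - a"
    define G1 where "G1 = {s. \<bar>s - x0\<bar> \<le> (16/7) * \<bar>\<beta>\<bar> * \<bar>a\<bar>}"
    define G2 where "G2 = {s. \<bar>s - x0\<bar> \<le> (16/7) * \<bar>t\<bar>}"
    have sub: "?A \<subseteq> G1 \<union> G2"
    proof
      fix s assume "s \<in> ?A"
      then have h0: "\<bar>s - \<mu> + a\<bar> \<le> \<bar>\<beta> * (s - \<mu>) + t\<bar>" by simp
      define u where "u = s - \<mu>"
      have h1: "\<bar>u + a\<bar> \<le> \<bar>\<beta>\<bar> * \<bar>u\<bar> + \<bar>t\<bar>"
        using h0 abs_triangle_ineq[of "\<beta> * u" t] unfolding u_def by (simp add: abs_mult)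
      have h2: "\<bar>\<beta>\<bar> * \<bar>u\<bar> \<le> \<bar>\<beta>\<bar> * (\<bar>u + a\<bar> + \<bar>a\<bar>)"
        by (intro mult_left_mono) (auto simp: abs_triangle_ineq4[of "u + a" a, simplified] )
      have h3: "\<bar>\<beta>\<bar> * \<bar>u + a\<bar> \<le> (1/8) * \<bar>u + a\<bar>" using b by (intro mult_right_mono) auto
      have "(7/8) * \<bar>u + a\<bar> \<le> \<bar>\<beta>\<bar> * \<bar>a\<bar> + \<bar>t\<bar>" using h1 h2 h3 by (simp add: algebra_simps)
      then have "\<bar>u + a\<bar> \<le> (16/7) * (\<bar>\<beta>\<bar> * \<bar>a\<bar>) \<or> \<bar>u + a\<bar> \<le> (16/7) * \<bar>t\<bar>"
      proof -
        have gen: "\<And>X P T::real. 7/8*X \<le> P + T \<Longrightarrow> X \<le> 16/7*P \<or> X \<le> 16/7*T" by linarith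
        show ?thesis by (rule gen) fact
      qed
      then have "\<bar>u + a\<bar> \<le> (16/7) * \<bar>\<beta>\<bar> * \<bar>a\<bar> \<or> \<bar>u + a\<bar> \<le> (16/7) * \<bar>t\<bar>" by (simp add: mult.assoc)
      moreover have "u + a = s - x0" unfolding u_def x0_def by simp
      ultimately show "s \<in> G1 \<union> G2" unfolding G1_def G2_def by auto
    qed
    have G1s: "G1 \<in> sets borel" unfolding G1_def by (rule ival_sets)
    have G2s: "G2 \<in> sets borel" unfolding G2_def by (rule ival_sets)
    have "emeasure ?N ?A \<le> emeasure ?N (G1 \<union> G2)" by (rule emeasure_mono[OF sub]) (use G1s G2s in simp)
    also have "\<dots> \<le> emeasure ?N G1 + emeasure ?N G2" by (rule emeasure_subadditive) (use G1s G2s in simp)+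
    also have "emeasure ?N G1 \<le> ennreal (4 * \<bar>\<beta>\<bar>)"
    proof -
      define \<rho> where "\<rho> = (16/7) * \<bar>\<beta>\<bar> * \<bar>a\<bar>"
      define B where "B = exp (- (\<bar>a\<bar>/2)\<^sup>2 / (2 * \<sigma>\<^sup>2)) / (sqrt (2 * pi) * \<sigma>)"
      have rho: "\<rho> \<ge> 0" unfolding \<rho>_def by simp
      have rho2: "\<rho> \<le> (2/7) * \<bar>a\<bar>"
      proof -
        have "\<bar>\<beta>\<bar> * \<bar>a\<bar> \<le> (1/8) * \<bar>a\<bar>" using b by (intro mult_right_mono) auto
        then show ?thesis unfolding \<rho>_def by simp
      qed
      have "emeasure ?N G1 \<le> ennreal (2 * \<rho> * B)"
        unfolding G1_def \<rho>_def[symmetric]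
      proof (rule ival_bound[OF _ _ rho])
        fix s assume "\<bar>s - x0\<bar> \<le> \<rho>"
        then have "\<bar>s - \<mu>\<bar> \<ge> \<bar>a\<bar> / 2" using rho2 unfolding x0_def by linarith
        then show "normal_density \<mu> \<sigma> s \<le> B" unfolding B_def by (rule nd_le_far[OF s]) simp
      qed (auto simp: normal_density_nonneg)
      also have "2 * \<rho> * B \<le> 4 * \<bar>\<beta>\<bar>"
      proof -
        define y where "y = \<bar>a\<bar> / \<sigma>"
        have y: "y \<ge> 0" using s by (simp add: y_def)
        have e: "(\<bar>a\<bar>/2)\<^sup>2 / (2 * \<sigma>\<^sup>2) = y\<^sup>2 / 8" using s by (simp add: y_def power_divide field_simps)
        have "2 * \<rho> * B = (32/7) * \<bar>\<beta>\<bar> * (y * exp (- y\<^sup>2 / 8)) / sqrt (2 * pi)"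
          unfolding \<rho>_def B_def using s
          apply (subst minus_divide_left[symmetric])
          apply (subst e)
          by (simp add: y_def field_simps)
        also have "\<dots> \<le> (32/7) * \<bar>\<beta>\<bar> * 2 / (16/7)"
        proof (rule frac_le)
          show "(32/7) * \<bar>\<beta>\<bar> * 2 \<ge> 0" by simp
          show "(32/7) * \<bar>\<beta>\<bar> * (y * exp (- y\<^sup>2 / 8)) \<le> (32/7) * \<bar>\<beta>\<bar> * 2"
            using yexp_le[OF y] by (intro mult_left_mono) auto
          show "0 < (16/7::real)" by simp
          show "(16/7) \<le> sqrt (2 * pi)" by (rule sqrt2pi)
        qed
        also have "\<dots> = 4 * \<bar>\<beta>\<bar>" by simp
        finally show ?thesis .
      qed
      then have "ennreal (2 * \<rho> * B) \<le> ennreal (4 * \<bar>\<beta>\<bar>)" by (rule ennreal_leI)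
      finally show ?thesis .
    qed
    also have "emeasure ?N G2 \<le> ennreal (2 * \<bar>t\<bar> / \<sigma>)"
    proof -
      have "emeasure ?N G2 \<le> ennreal (2 * ((16/7) * \<bar>t\<bar>) * (1 / (sqrt (2 * pi) * \<sigma>)))"
        unfolding G2_def
        by (rule ival_bound) (auto simp: normal_density_nonneg nd_le[OF s])
      also have "2 * ((16/7) * \<bar>t\<bar>) * (1 / (sqrt (2 * pi) * \<sigma>)) \<le> 2 * \<bar>t\<bar> / \<sigma>"
      proof -
        have "2 * ((16/7) * \<bar>t\<bar>) * (1 / (sqrt (2 * pi) * \<sigma>)) = ((32/7) * \<bar>t\<bar> / \<sigma>) / sqrt (2 * pi)"
          using s by (simp add: field_simps)
        also have "\<dots> \<le> ((32/7) * \<bar>t\<bar> / \<sigma>) / (16/7)"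
          using sqrt2pi s by (intro divide_left_mono) auto
        also have "\<dots> = 2 * \<bar>t\<bar> / \<sigma>" by simp
        finally show ?thesis .
      qed
      then have "ennreal (2 * ((16/7) * \<bar>t\<bar>) * (1 / (sqrt (2 * pi) * \<sigma>))) \<le> ennreal (2 * \<bar>t\<bar> / \<sigma>)"
        by (rule ennreal_leI)
      finally show ?thesis .
    qed
    also have "ennreal (4 * \<bar>\<beta>\<bar>) + ennreal (2 * \<bar>t\<bar> / \<sigma>) = ennreal (4 * \<bar>\<beta>\<bar> + 2 * \<bar>t\<bar> / \<sigma>)"
      using s by (intro ennreal_plus[symmetric]) auto
    also have "\<dots> \<le> ennreal (8 * \<bar>\<beta>\<bar> + 4 * \<bar>t\<bar> / \<sigma>)"
    proof (intro ennreal_leI)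
      have tt: "0 \<le> 2 * \<bar>t\<bar> / \<sigma>" using s by simp
      have e: "4 * \<bar>t\<bar> / \<sigma> = 2 * (2 * \<bar>t\<bar> / \<sigma>)" by simp
      show "4 * \<bar>\<beta>\<bar> + 2 * \<bar>t\<bar> / \<sigma> \<le> 8 * \<bar>\<beta>\<bar> + 4 * \<bar>t\<bar> / \<sigma>"
        unfolding e using tt by simp
    qed
    finally show ?thesis by (simp add: add_mono)
  qed
qed


lemma abs_moment1:
  assumes s: "\<sigma> > 0"
  shows "(\<integral>\<^sup>+t. ennreal \<bar>t - \<mu>\<bar> \<partial>density lborel (normal_density \<mu> \<sigma>)) \<le> ennreal \<sigma>"
proof -
  have "(\<integral>\<^sup>+t. ennreal \<bar>t - \<mu>\<bar> \<partial>density lborel (normal_density \<mu> \<sigma>))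
      = (\<integral>\<^sup>+t. ennreal (normal_density \<mu> \<sigma> t) * ennreal \<bar>t - \<mu>\<bar> \<partial>lborel)"
    by (rule nn_integral_density) auto
  also have "\<dots> = (\<integral>\<^sup>+t. ennreal (normal_density \<mu> \<sigma> t * \<bar>t - \<mu>\<bar>) \<partial>lborel)"
    by (intro nn_integral_cong) (simp add: ennreal_mult')
  also have "\<dots> = ennreal (integral\<^sup>L lborel (\<lambda>t. normal_density \<mu> \<sigma> t * \<bar>t - \<mu>\<bar>))"
  proof (rule nn_integral_eq_integral)
    show "integrable lborel (\<lambda>t. normal_density \<mu> \<sigma> t * \<bar>t - \<mu>\<bar>)"
      using integrable_normal_moment_abs[OF s, of \<mu> 1] by simp
  qed (simp add: normal_density_nonneg)
  also have "integral\<^sup>L lborel (\<lambda>t. normal_density \<mu> \<sigma> t * \<bar>t - \<mu>\<bar>) = \<sigma> * sqrt (2 / pi)"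
    using integral_normal_moment_abs_odd[OF s, of \<mu> 0] by simp
  also have "ennreal (\<sigma> * sqrt (2 / pi)) \<le> ennreal \<sigma>"
  proof (rule ennreal_leI)
    have "2 / pi \<le> 1" using pi_gt3 by simp
    then have "sqrt (2 / pi) \<le> 1" by simp
    then show "\<sigma> * sqrt (2 / pi) \<le> \<sigma>" using s by (simp add: mult_left_le)
  qed
  finally show ?thesis .
qed

lemma pair_bound:
  assumes s1: "\<sigma>1 > 0" and s2: "\<sigma>2 > 0"
  shows "measure (density lborel (normal_density \<mu>1 \<sigma>1) \<Otimes>\<^sub>M density lborel (normal_density \<mu>2 \<sigma>2))
      {z. \<bar>fst z + c\<bar> \<le> \<bar>\<beta> * fst z + snd z\<bar>} \<le> 8 * \<bar>\<beta>\<bar> + 4 * (\<bar>\<beta> * \<mu>1 + \<mu>2\<bar> + \<sigma>2) / \<sigma>1"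
proof -
  define N1 where "N1 = density lborel (normal_density \<mu>1 \<sigma>1)"
  define N2 where "N2 = density lborel (normal_density \<mu>2 \<sigma>2)"
  interpret N1: prob_space N1 unfolding N1_def by (rule prob_space_normal_density[OF s1])
  interpret N2: prob_space N2 unfolding N2_def by (rule prob_space_normal_density[OF s2])
  interpret P: pair_prob_space N1 N2 by unfold_locales
  define F where "F = {z. \<bar>fst z + c\<bar> \<le> \<bar>\<beta> * fst z + snd z\<bar>}"
  have Fs: "F \<in> sets (N1 \<Otimes>\<^sub>M N2)"
  proof -
    have "Measurable.pred (N1 \<Otimes>\<^sub>M N2) (\<lambda>z. \<bar>fst z + c\<bar> \<le> \<bar>\<beta> * fst z + snd z\<bar>)"
      unfolding N1_def N2_def by measurable
    moreover have "F = {z \<in> space (N1 \<Otimes>\<^sub>M N2). \<bar>fst z + c\<bar> \<le> \<bar>\<beta> * fst z + snd z\<bar>}"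
      by (auto simp: F_def space_pair_measure N1_def N2_def)
    ultimately show ?thesis by (simp add: pred_def)
  qed
  define K where "K = 8 * \<bar>\<beta>\<bar> + 4 * \<bar>\<beta> * \<mu>1 + \<mu>2\<bar> / \<sigma>1"
  have Kp: "K \<ge> 0" using s1 by (simp add: K_def)
  have "emeasure (N1 \<Otimes>\<^sub>M N2) F = (\<integral>\<^sup>+t. emeasure N1 ((\<lambda>s. (s, t)) -` F) \<partial>N2)"
    by (rule P.emeasure_pair_measure_alt2[OF Fs])
  also have "\<dots> \<le> (\<integral>\<^sup>+t. ennreal K + ennreal (4 / \<sigma>1) * ennreal \<bar>t - \<mu>2\<bar> \<partial>N2)"
  proof (rule nn_integral_mono)
    fix t
    have eqs: "(\<lambda>s. (s, t)) -` F = {s. \<bar>s - \<mu>1 + (\<mu>1 + c)\<bar> \<le> \<bar>\<beta> * (s - \<mu>1) + (\<beta> * \<mu>1 + t)\<bar>}"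
      by (auto simp: F_def algebra_simps)
    have sl: "emeasure N1 {s. \<bar>s - \<mu>1 + (\<mu>1 + c)\<bar> \<le> \<bar>\<beta> * (s - \<mu>1) + (\<beta> * \<mu>1 + t)\<bar>}
        \<le> ennreal (8 * \<bar>\<beta>\<bar> + 4 * \<bar>\<beta> * \<mu>1 + t\<bar> / \<sigma>1)"
      unfolding N1_def by (rule slice[OF s1])
    have "emeasure N1 ((\<lambda>s. (s, t)) -` F) \<le> ennreal (8 * \<bar>\<beta>\<bar> + 4 * \<bar>\<beta> * \<mu>1 + t\<bar> / \<sigma>1)"
      unfolding eqs by (rule sl)
    also have "\<dots> \<le> ennreal (K + 4 / \<sigma>1 * \<bar>t - \<mu>2\<bar>)"
    proof (rule ennreal_leI)
      have "\<bar>\<beta> * \<mu>1 + t\<bar> \<le> \<bar>\<beta> * \<mu>1 + \<mu>2\<bar> + \<bar>t - \<mu>2\<bar>" by linarith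
      then have "4 * \<bar>\<beta> * \<mu>1 + t\<bar> / \<sigma>1 \<le> 4 * (\<bar>\<beta> * \<mu>1 + \<mu>2\<bar> + \<bar>t - \<mu>2\<bar>) / \<sigma>1"
        using s1 by (intro divide_right_mono) auto
      then show "8 * \<bar>\<beta>\<bar> + 4 * \<bar>\<beta> * \<mu>1 + t\<bar> / \<sigma>1 \<le> K + 4 / \<sigma>1 * \<bar>t - \<mu>2\<bar>"
        unfolding K_def by (simp add: add_divide_distrib algebra_simps)
    qed
    also have "\<dots> = ennreal K + ennreal (4 / \<sigma>1) * ennreal \<bar>t - \<mu>2\<bar>"
    proof -
      have "ennreal (K + 4 / \<sigma>1 * \<bar>t - \<mu>2\<bar>) = ennreal K + ennreal (4 / \<sigma>1 * \<bar>t - \<mu>2\<bar>)"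
        using Kp s1 by (intro ennreal_plus) auto
      also have "ennreal (4 / \<sigma>1 * \<bar>t - \<mu>2\<bar>) = ennreal (4 / \<sigma>1) * ennreal \<bar>t - \<mu>2\<bar>"
        using s1 by (intro ennreal_mult) auto
      finally show ?thesis .
    qed
    finally show "emeasure N1 ((\<lambda>s. (s, t)) -` F) \<le> ennreal K + ennreal (4 / \<sigma>1) * ennreal \<bar>t - \<mu>2\<bar>" .
  qed
  also have "\<dots> = ennreal K + ennreal (4 / \<sigma>1) * (\<integral>\<^sup>+t. ennreal \<bar>t - \<mu>2\<bar> \<partial>N2)"
  proof -
    have m: "(\<lambda>t. ennreal \<bar>t - \<mu>2\<bar>) \<in> borel_measurable N2" unfolding N2_def by measurable
    have "(\<integral>\<^sup>+t. ennreal K + ennreal (4 / \<sigma>1) * ennreal \<bar>t - \<mu>2\<bar> \<partial>N2)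
        = (\<integral>\<^sup>+t. ennreal K \<partial>N2) + (\<integral>\<^sup>+t. ennreal (4 / \<sigma>1) * ennreal \<bar>t - \<mu>2\<bar> \<partial>N2)"
      by (rule nn_integral_add) (use m in auto)
    also have "(\<integral>\<^sup>+t. ennreal K \<partial>N2) = ennreal K" using N2.emeasure_space_1 by simp
    also have "(\<integral>\<^sup>+t. ennreal (4 / \<sigma>1) * ennreal \<bar>t - \<mu>2\<bar> \<partial>N2) = ennreal (4 / \<sigma>1) * (\<integral>\<^sup>+t. ennreal \<bar>t - \<mu>2\<bar> \<partial>N2)"
      by (rule nn_integral_cmult[OF m])
    finally show ?thesis .
  qed
  also have "\<dots> \<le> ennreal K + ennreal (4 / \<sigma>1) * ennreal \<sigma>2"
    unfolding N2_def by (intro add_left_mono mult_left_mono abs_moment1[OF s2]) auto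
  also have "\<dots> = ennreal (8 * \<bar>\<beta>\<bar> + 4 * (\<bar>\<beta> * \<mu>1 + \<mu>2\<bar> + \<sigma>2) / \<sigma>1)"
    using Kp s1 s2 by (simp add: ennreal_plus ennreal_mult'[symmetric] K_def add_divide_distrib algebra_simps)
  finally have e: "emeasure (N1 \<Otimes>\<^sub>M N2) F \<le> ennreal (8 * \<bar>\<beta>\<bar> + 4 * (\<bar>\<beta> * \<mu>1 + \<mu>2\<bar> + \<sigma>2) / \<sigma>1)" .
  have bp: "8 * \<bar>\<beta>\<bar> + 4 * (\<bar>\<beta> * \<mu>1 + \<mu>2\<bar> + \<sigma>2) / \<sigma>1 \<ge> 0" using s1 s2 by simp
  have "measure (N1 \<Otimes>\<^sub>M N2) F \<le> enn2real (ennreal (8 * \<bar>\<beta>\<bar> + 4 * (\<bar>\<beta> * \<mu>1 + \<mu>2\<bar> + \<sigma>2) / \<sigma>1))"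
    unfolding measure_def by (rule enn2real_mono[OF e]) simp
  then show ?thesis using bp unfolding N1_def N2_def F_def by simp
qed


lemma pd_det: "pos_def_mat d S \<Longrightarrow> Determinant.det (toM d S) \<noteq> 0"
proof
  assume pd: "pos_def_mat d S" and "Determinant.det (toM d S) = 0"
  then obtain v where v: "v \<in> carrier_vec d" "v \<noteq> 0\<^sub>v d" "toM d S *\<^sub>v v = 0\<^sub>v d"
    using det_0_iff_vec_prod_zero[OF toM_carrier] by blast
  define vf where "vf = (\<lambda>i. v $ i)"
  have tv: "tov d vf = v" using v(1) by (intro eq_vecI) (auto simp: vf_def)
  have nz: "\<exists>i<d. vf i \<noteq> 0"
  proof (rule ccontr)
    assume "\<not> ?thesis"
    then have "v = 0\<^sub>v d" using v(1) by (intro eq_vecI) (auto simp: vf_def)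
    then show False using v(2) by simp
  qed
  have "dot d vf (mat_vec d S vf) = v \<bullet> 0\<^sub>v d" unfolding dot_tov mat_vec_tov tv v(3) ..
  also have "\<dots> = 0" using v(1) by simp
  finally show False using pd nz unfolding pos_def_mat_def by auto
qed

lemma good_det: "good d M \<Longrightarrow> det_mat d M \<noteq> 0"
  unfolding good_def by simp

lemma congr_eq_mmul: "mmul d M (mmul d S (tr M)) = congr d M S"
  by (simp add: congr_def)

lemma gauss_to_PiM:
  assumes sym: "symmetric_mat d S" and pd: "pos_def_mat d S" and g: "good d M"
    and diag: "\<forall>i<d. \<forall>j<d. i \<noteq> j \<longrightarrow> congr d M S i j = 0"
  shows "distr (gaussian d m S) (lebesgue_d d) (lmap d M) =
     PiM {..<d} (\<lambda>i. density lborel (normal_density (lmap d M m i) (sqrt (congr d M S i i))))"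
    "\<forall>i<d. congr d M S i i > 0"
proof -
  have pdD: "pos_def_mat d (congr d M S)" by (rule pd_congr[OF pd good_det[OF g]])
  show pos: "\<forall>i<d. congr d M S i i > 0" using pd_diag_pos[OF pdD] by auto
  show "distr (gaussian d m S) (lebesgue_d d) (lmap d M) =
     PiM {..<d} (\<lambda>i. density lborel (normal_density (lmap d M m i) (sqrt (congr d M S i i))))"
    unfolding gauss_distr[OF g pd_det[OF pd]] congr_eq_mmul
    by (rule gaussian_diag[OF diag pos])
qed

lemma gauss_prob:
  assumes sym: "symmetric_mat d S" and pd: "pos_def_mat d S"
  shows "prob_space (gaussian d m S)"
proof -
  obtain M where M: "good d M" "\<forall>i<d. \<forall>j<d. i \<noteq> j \<longrightarrow> congr d M S i j = 0"
    using elim_thm[OF sym pd, of "{}"] by auto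
  note D = gauss_to_PiM[OF sym pd M]
  have pp: "prob_space (PiM {..<d} (\<lambda>i. density lborel (normal_density (lmap d M m i) (sqrt (congr d M S i i)))))"
    using D(2) by (intro prob_space_PiM prob_space_normal_density) auto
  have hm: "lmap d M \<in> measurable (gaussian d m S) (lebesgue_d d)" by (simp add: gaussian_def lmap_meas)
  have "emeasure (gaussian d m S) (space (gaussian d m S)) = emeasure (distr (gaussian d m S) (lebesgue_d d) (lmap d M)) (space (lebesgue_d d))"
    using hm by (subst emeasure_distr) (auto intro!: arg_cong2[where f=emeasure] dest: measurable_space)
  also have "\<dots> = 1" unfolding D(1) using prob_space.emeasure_space_1[OF pp] by (simp add: lebesgue_d_def space_PiM)
  finally show ?thesis by (rule prob_spaceI)
qed


lemma pd_bf_pos: "pos_def_mat d S \<Longrightarrow> \<exists>i<d. x i \<noteq> 0 \<Longrightarrow> bf d S x x > 0"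
  unfolding pos_def_mat_def bf_def by auto

lemma row_of_rowM_k: "rowM d k a b k j = (if j = k then a else b j)"
  by (simp add: rowM_def)

lemma mmul_row_unit:
  assumes "\<forall>j<d. A q j = idm q j" "q < d" "j < d"
  shows "mmul d A B q j = B q j"
proof -
  have "mmul d A B q j = (\<Sum>m<d. if m = q then B m j else 0)"
    unfolding mmul_def using assms by (intro sum.cong) (auto simp: idm_def)
  also have "\<dots> = B q j" using assms by (simp add: sum.delta)
  finally show ?thesis .
qed

lemma PiM_pair:
  fixes N :: "nat \<Rightarrow> real measure"
  assumes k: "k < d" and l: "l < d" and kl: "k \<noteq> l" and pr: "\<And>i. i < d \<Longrightarrow> prob_space (N i)"
    and sN: "\<And>i. sets (N i) = sets borel"
  shows "distr (PiM {..<d} N) (lborel \<Otimes>\<^sub>M lborel) (\<lambda>y. (y k, y l)) = N k \<Otimes>\<^sub>M N l"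
proof -
  define N' where "N' i = (if i < d then N i else density lborel (normal_density 0 1))" for i
  have pr': "prob_space (N' i)" for i
    unfolding N'_def using pr by (auto intro: prob_space_normal_density)
  interpret N': product_prob_space N' by (intro product_prob_spaceI pr')
  have PN: "PiM {..<d} N = PiM {..<d} N'" by (rule PiM_cong) (auto simp: N'_def)
  have sN': "sets (N' i) = sets borel" for i by (simp add: N'_def sN)
  interpret Nk: prob_space "N k" using pr k by auto
  interpret Nl: prob_space "N l" using pr l by auto
  have sp: "space (N' i) = UNIV" for i using sets_eq_imp_space_eq[OF sN'[of i]] by simp
  have spN: "space (N i) = UNIV" for i using sets_eq_imp_space_eq[OF sN[of i]] by simp
  have pm: "(\<lambda>y. (y k, y l)) \<in> measurable (PiM {..<d} N') (lborel \<Otimes>\<^sub>M lborel)"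
  proof -
    have "(\<lambda>y. y k) \<in> measurable (PiM {..<d} N') (N' k)" using k by (intro measurable_component_singleton) auto
    moreover have "(\<lambda>y. y l) \<in> measurable (PiM {..<d} N') (N' l)" using l by (intro measurable_component_singleton) auto
    ultimately show ?thesis
      by (intro measurable_Pair) (auto simp: measurable_cong_sets[OF refl sN'])
  qed
  show ?thesis unfolding PN
  proof (rule pair_measure_eqI[symmetric])
    show "sigma_finite_measure (N k)" "sigma_finite_measure (N l)" by unfold_locales
    show "sets (N k \<Otimes>\<^sub>M N l) = sets (distr (PiM {..<d} N') (lborel \<Otimes>\<^sub>M lborel) (\<lambda>y. (y k, y l)))"
      using sN by (simp cong: sets_pair_measure_cong)
  next
    fix A B assume A: "A \<in> sets (N k)" and B: "B \<in> sets (N l)"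
    define C where "C i = (if i = k then A else if i = l then B else UNIV)" for i
    have C: "C i \<in> sets (N' i)" for i using A B sN sN' by (auto simp: C_def)
    have pre: "(\<lambda>y. (y k, y l)) -` (A \<times> B) \<inter> space (PiM {..<d} N') = PiE {..<d} C"
      using k l kl by (auto simp: space_PiM PiE_def Pi_def C_def sp)
    have AB: "A \<times> B \<in> sets (lborel \<Otimes>\<^sub>M lborel)" using A B sN by simp
    have "emeasure (distr (PiM {..<d} N') (lborel \<Otimes>\<^sub>M lborel) (\<lambda>y. (y k, y l))) (A \<times> B)
        = emeasure (PiM {..<d} N') (PiE {..<d} C)"
      by (subst emeasure_distr[OF pm AB]) (simp add: pre)
    also have "\<dots> = (\<Prod>i<d. emeasure (N' i) (C i))" using C by (intro N'.emeasure_PiM) auto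
    also have "\<dots> = emeasure (N' k) (C k) * (\<Prod>i\<in>{..<d} - {k}. emeasure (N' i) (C i))"
      using k by (intro prod.remove) auto
    also have "(\<Prod>i\<in>{..<d} - {k}. emeasure (N' i) (C i)) = emeasure (N' l) (C l) * (\<Prod>i\<in>{..<d} - {k} - {l}. emeasure (N' i) (C i))"
      using l kl by (intro prod.remove) auto
    also have "(\<Prod>i\<in>{..<d} - {k} - {l}. emeasure (N' i) (C i)) = 1"
    proof (rule prod.neutral, intro ballI)
      fix i assume "i \<in> {..<d} - {k} - {l}"
      then have "C i = space (N' i)" by (auto simp: C_def sp)
      then show "emeasure (N' i) (C i) = 1" using prob_space.emeasure_space_1[OF pr'] by simp
    qed
    finally show "emeasure (N k) A * emeasure (N l) B = emeasure (distr (PiM {..<d} N') (lborel \<Otimes>\<^sub>M lborel) (\<lambda>y. (y k, y l))) (A \<times> B)"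
      using k l kl by (simp add: C_def N'_def[of k] N'_def[of l])
  qed
qed


lemma pair_law:
  assumes sym: "symmetric_mat d S" and pd: "pos_def_mat d S"
    and rk: "\<exists>i<d. r i \<noteq> 0" and wk: "\<exists>i<d. w i \<noteq> 0" and orth: "bf d S r w = 0"
  shows "distr (gaussian d m S) (lborel \<Otimes>\<^sub>M lborel) (\<lambda>x. (dot d r x, dot d w x)) =
     density lborel (normal_density (dot d r m) (sqrt (bf d S r r))) \<Otimes>\<^sub>M
     density lborel (normal_density (dot d w m) (sqrt (bf d S w w)))"
proof -
  obtain k where k: "k < d" "r k \<noteq> 0" using rk by blast
  define R1 where "R1 = rowM d k (r k) r"
  have R1k: "R1 k j = r j" for j by (simp add: R1_def rowM_def)
  have R1o: "i \<noteq> k \<Longrightarrow> R1 i j = idm i j" for i j by (simp add: R1_def rowM_def)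
  define w' where "w' = (\<lambda>j. if j = k then w k / r k else w j - w k * r j / r k)"
  have "\<exists>l<d. l \<noteq> k \<and> w' l \<noteq> 0"
  proof (rule ccontr)
    assume "\<not> ?thesis"
    then have z: "\<forall>l<d. l \<noteq> k \<longrightarrow> w' l = 0" by auto
    define t where "t = w k / r k"
    have wt: "\<forall>j<d. w j = t * r j + 0 * r j"
    proof (intro allI impI)
      fix j assume j: "j < d"
      show "w j = t * r j + 0 * r j"
      proof (cases "j = k")
        case True then show ?thesis using k by (simp add: t_def)
      next
        case False then have "w' j = 0" using z j by auto
        then show ?thesis using False by (simp add: w'_def t_def)
      qed
    qed
    have "bf d S r w = bf d S r (\<lambda>j. t * r j + 0 * r j)" using wt by (intro bf_cong) auto
    also have "\<dots> = t * bf d S r r + 0 * bf d S r r" by (rule bf_lin_right)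
    also have "\<dots> = t * bf d S r r" by simp
    finally have "t * bf d S r r = 0" using orth by simp
    moreover have "bf d S r r > 0" by (rule pd_bf_pos[OF pd rk])
    ultimately have "t = 0" by simp
    then have "\<forall>j<d. w j = 0" using wt by simp
    then show False using wk by auto
  qed
  then obtain l where l: "l < d" "l \<noteq> k" "w' l \<noteq> 0" by blast
  define R2 where "R2 = rowM d l (w' l) w'"
  have R2l: "R2 l j = w' j" for j by (simp add: R2_def rowM_def)
  have R2o: "i \<noteq> l \<Longrightarrow> R2 i j = idm i j" for i j by (simp add: R2_def rowM_def)
  define Phi where "Phi = mmul d R2 R1"
  have gPhi: "good d Phi" unfolding Phi_def R1_def R2_def
    by (intro good_mult good_row k l)
  have Phik: "Phi k j = r j" if "j < d" for j
    unfolding Phi_def using mmul_row_unit[of d R2 k j R1] R2o l(2) k(1) that by (simp add: R1k)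
  have Phil: "Phi l j = w j" if j: "j < d" for j
  proof -
    have "Phi l j = (\<Sum>m<d. w' m * R1 m j)" unfolding Phi_def mmul_def by (simp add: R2l)
    also have "\<dots> = w' k * R1 k j + (\<Sum>m\<in>{..<d} - {k}. w' m * R1 m j)"
      using k by (intro sum.remove) auto
    also have "(\<Sum>m\<in>{..<d} - {k}. w' m * R1 m j) = (\<Sum>m\<in>{..<d} - {k}. if m = j then w' m else 0)"
      by (intro sum.cong) (auto simp: R1o idm_def)
    also have "\<dots> = (if j \<in> {..<d} - {k} then w' j else 0)" by (simp add: sum.delta)
    also have "w' k * R1 k j + \<dots> = w j"
      using k j by (auto simp: R1k w'_def field_simps)
    finally show ?thesis .
  qed
  define S1 where "S1 = congr d Phi S"
  have sym1: "symmetric_mat d S1" unfolding S1_def by (rule sym_congr[OF sym])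
  have pd1: "pos_def_mat d S1" unfolding S1_def by (rule pd_congr[OF pd good_det[OF gPhi]])
  have S1kl: "S1 k l = 0"
  proof -
    have "S1 k l = bf d S (\<lambda>j. Phi k j) (\<lambda>j. Phi l j)" unfolding S1_def by (rule congr_entry)
    also have "\<dots> = bf d S r w" using Phik Phil by (intro bf_cong) auto
    finally show ?thesis using orth by simp
  qed
  have S1lk: "S1 l k = 0" using sym1 S1kl k l unfolding symmetric_mat_def by metis
  obtain M' where M': "good d M'" "\<forall>i<d. \<forall>j<d. i \<noteq> j \<longrightarrow> congr d M' S1 i j = 0"
      "\<forall>q\<in>{k,l}. \<forall>j<d. M' q j = idm q j"
    using elim_thm[OF sym1 pd1, of "{k,l}"] k l S1kl S1lk by auto
  define M where "M = mmul d M' Phi"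
  have gM: "good d M" unfolding M_def by (rule good_mult[OF M'(1) gPhi])
  have Mk: "M k j = r j" if "j < d" for j
    unfolding M_def using mmul_row_unit[of d M' k j Phi] M'(3) k(1) that Phik by auto
  have Ml: "M l j = w j" if "j < d" for j
    unfolding M_def using mmul_row_unit[of d M' l j Phi] M'(3) l(1) that Phil by auto
  have diag: "\<forall>i<d. \<forall>j<d. i \<noteq> j \<longrightarrow> congr d M S i j = 0"
    using M'(2) unfolding M_def S1_def by (simp add: congr_mult)
  note D = gauss_to_PiM[OF sym pd gM diag]
  have Dk: "congr d M S k k = bf d S r r"
    unfolding congr_entry using Mk by (intro bf_cong) auto
  have Dl: "congr d M S l l = bf d S w w"
    unfolding congr_entry using Ml by (intro bf_cong) auto
  have lk: "lmap d M m k = dot d r m" using k(1) Mk by (simp add: lmap_def dot_def)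
  have ll: "lmap d M m l = dot d w m" using l(1) Ml by (simp add: lmap_def dot_def)
  have hm: "lmap d M \<in> measurable (gaussian d m S) (lebesgue_d d)" by (simp add: gaussian_def lmap_meas)
  have pm: "(\<lambda>y. (y k, y l)) \<in> measurable (lebesgue_d d) (lborel \<Otimes>\<^sub>M lborel)"
    unfolding lebesgue_d_def using k(1) l(1)
    by (intro measurable_Pair) (auto intro!: measurable_component_singleton)
  have "distr (gaussian d m S) (lborel \<Otimes>\<^sub>M lborel) (\<lambda>x. (dot d r x, dot d w x))
      = distr (gaussian d m S) (lborel \<Otimes>\<^sub>M lborel) ((\<lambda>y. (y k, y l)) \<circ> lmap d M)"
  proof (rule distr_cong[OF refl refl])
    fix x
    show "(dot d r x, dot d w x) = ((\<lambda>y. (y k, y l)) \<circ> lmap d M) x"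
      using k(1) l(1) Mk Ml by (simp add: lmap_def dot_def)
  qed
  also have "\<dots> = distr (distr (gaussian d m S) (lebesgue_d d) (lmap d M)) (lborel \<Otimes>\<^sub>M lborel) (\<lambda>y. (y k, y l))"
    by (rule distr_distr[OF pm hm, symmetric])
  also have "\<dots> = density lborel (normal_density (lmap d M m k) (sqrt (congr d M S k k))) \<Otimes>\<^sub>M
      density lborel (normal_density (lmap d M m l) (sqrt (congr d M S l l)))"
    unfolding D(1)
    by (rule PiM_pair[OF k(1) l(1) l(2)[symmetric]]) (use D(2) in \<open>auto intro: prob_space_normal_density\<close>)
  finally show ?thesis unfolding Dk Dl lk ll .
qed


declare sq_nonneg[simp]

lemma pos_disagree: "pos A \<noteq> pos B \<Longrightarrow> \<bar>A\<bar> \<le> \<bar>A - B\<bar>"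
  unfolding pos_def by (auto split: if_splits)

lemma bf_idm: "bf d idm x y = dot d x y"
proof -
  have "mat_vec d idm y i = y i" if "i < d" for i
  proof -
    have "mat_vec d idm y i = (\<Sum>j<d. if i = j then y j else 0)"
      unfolding mat_vec_def by (intro sum.cong) (auto simp: idm_def)
    then show ?thesis using that by (simp add: sum.delta)
  qed
  then show ?thesis unfolding bf_def by (intro dot_cong) auto
qed

lemma dot_cs: "\<bar>dot d x y\<bar> \<le> vnorm d x * vnorm d y"
proof -
  have sym: "symmetric_mat d idm" by (auto simp: symmetric_mat_def idm_def)
  have psd: "bf d idm z z \<ge> 0" for z unfolding bf_idm dot_self_sq by (rule sq_nonneg)
  have "(dot d x y)^2 \<le> sq d x * sq d y"
    using psd_cs[OF sym psd, of x y] unfolding bf_idm dot_self_sq .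
  then have "sqrt ((dot d x y)^2) \<le> sqrt (sq d x * sq d y)" by (rule real_sqrt_le_mono)
  then show ?thesis unfolding vnorm_sq by (simp add: real_sqrt_mult)
qed

lemma psd_of_pd: "pos_def_mat d S \<Longrightarrow> bf d S z z \<ge> 0"
proof (cases "\<exists>i<d. z i \<noteq> 0")
  case True
  assume "pos_def_mat d S"
  then show ?thesis using pd_bf_pos[OF _ True] by (simp add: less_imp_le)
next
  case False
  then show ?thesis using bf_zero_left[of d z] by auto
qed

lemma dot_split: "dot d (\<lambda>i. x i - y i) z = dot d x z - dot d y z"
  by (simp add: dot_def algebra_simps sum_subtractf)


lemma main_bound:
  fixes \<mu> :: "nat \<Rightarrow> real" and S :: "nat \<Rightarrow> nat \<Rightarrow> real"
  assumes d: "d \<ge> 1" and sym: "symmetric_mat d S" and pd: "pos_def_mat d S"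
    and nr: "vnorm d r = 1" and nrh: "vnorm d rh = 1" and eps: "vnorm d (\<lambda>i. r i - rh i) \<le> \<epsilon>1"
  shows "measure (gaussian d \<mu> S)
        {x \<in> space (gaussian d \<mu> S). pos (dot d r x + c) \<noteq> pos (dot d rh x + c)}
     \<le> \<epsilon>1 * (12 * sqrt (lambda_max d S / lambda_min d S) + 4 * vnorm d \<mu> / sqrt (lambda_min d S))"
proof -
  define G where "G = gaussian d \<mu> S"
  define Ev where "Ev = {x \<in> space G. pos (dot d r x + c) \<noteq> pos (dot d rh x + c)}"
  define lmin where "lmin = lambda_min d S"
  define lmax where "lmax = lambda_max d S"
  define v where "v = (\<lambda>i. r i - rh i)"
  note sp = spectral[OF d sym pd, folded lmin_def lmax_def]
  have lmin: "lmin > 0" "lmin \<le> lmax" using sp by auto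
  have sqr: "sq d r = 1" using nr unfolding vnorm_sq by simp
  have sqrh: "sq d rh = 1" using nrh unfolding vnorm_sq by simp
  have e0: "\<epsilon>1 \<ge> 0" using eps vnorm_sq[of d v] unfolding v_def by (metis real_sqrt_ge_zero sq_nonneg order_trans)
  have sqv: "sq d v \<le> \<epsilon>1^2"
  proof -
    have "sqrt (sq d v) \<le> \<epsilon>1" using eps unfolding vnorm_sq v_def .
    then have "(sqrt (sq d v))^2 \<le> \<epsilon>1^2" by (rule power_mono) (simp_all add: sq_nonneg)
    then show ?thesis using sq_nonneg[of d v] by simp
  qed
  define \<kappa> where "\<kappa> = sqrt (lmax / lmin)"
  have k1: "\<kappa> \<ge> 1" unfolding \<kappa>_def using lmin by simp
  have kappa: "\<kappa> = sqrt lmax / sqrt lmin" unfolding \<kappa>_def by (simp add: real_sqrt_divide)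
  define RHS where "RHS = \<epsilon>1 * (12 * \<kappa> + 4 * vnorm d \<mu> / sqrt lmin)"
  have nmu: "vnorm d \<mu> \<ge> 0" unfolding vnorm_sq by simp
  have RHS0: "RHS \<ge> 0" unfolding RHS_def using e0 k1 nmu lmin by simp
  have RHS12: "RHS \<ge> 12 * \<epsilon>1"
  proof -
    have "12 * \<epsilon>1 \<le> \<epsilon>1 * (12 * \<kappa>)" using mult_left_mono[OF k1 e0] by simp
    also have "\<dots> \<le> RHS" unfolding RHS_def using e0 nmu lmin by (intro mult_left_mono) auto
    finally show ?thesis .
  qed
  interpret G: prob_space G unfolding G_def by (rule gauss_prob[OF sym pd])
  have goal: "measure G Ev \<le> RHS"
  proof (cases "\<forall>i<d. r i = rh i")
    case True
    have "Ev = {}" unfolding Ev_def using dot_cong[of d r rh] True by auto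
    then show ?thesis using RHS0 by simp
  next
    case rne: False
    define s1 where "s1 = bf d S r r"
    have rk: "\<exists>i<d. r i \<noteq> 0" using sqr sq_pos_iff[of d r] by simp
    have s1b: "lmin \<le> s1" "s1 \<le> lmax" using sp(3)[of r] sp(4)[of r] sqr unfolding s1_def by auto
    have s1p: "s1 > 0" using s1b lmin by simp
    define \<beta> where "\<beta> = bf d S r v / s1"
    define w where "w = (\<lambda>i. 1 * v i + (- \<beta>) * r i)"
    have orth: "bf d S r w = 0" unfolding w_def bf_lin_right \<beta>_def s1_def[symmetric] using s1p by simp
    have vdec: "v = (\<lambda>i. \<beta> * r i + 1 * w i)" unfolding w_def by auto
    show ?thesis
    proof (cases "\<forall>i<d. w i = 0")
      case True
      have vr: "\<forall>i<d. v i = \<beta> * r i" using True vdec by (metis add.right_neutral mult_zero_right)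
      have rhr: "\<forall>i<d. rh i = (1 - \<beta>) * r i" using vr unfolding v_def by (auto simp: algebra_simps)
      have "sq d rh = (1 - \<beta>)^2 * sq d r"
        unfolding sq_def using rhr by (simp add: sum_distrib_left power_mult_distrib)
      then have "(1 - \<beta>)^2 = 1" using sqr sqrh by simp
      then have "\<beta> = 0 \<or> \<beta> = 2" by (auto simp: power2_eq_square algebra_simps)
      moreover have "\<beta> \<noteq> 0"
      proof
        assume "\<beta> = 0"
        then have "\<forall>i<d. r i = rh i" using rhr by simp
        then show False using rne by simp
      qed
      ultimately have b2: "\<beta> = 2" by simp
      have "sq d v = 4 * sq d r" unfolding sq_def using vr b2 by (simp add: sum_distrib_left power_mult_distrib)
      then have "vnorm d v = 2" using sqr unfolding vnorm_sq by simp
      then have "\<epsilon>1 \<ge> 2" using eps unfolding v_def by simp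
      have "measure G Ev \<le> 1" by (rule G.prob_le_1)
      also have "1 \<le> RHS" using RHS12 \<open>\<epsilon>1 \<ge> 2\<close> by simp
      finally show ?thesis .
    next
      case False
      then have wk: "\<exists>i<d. w i \<noteq> 0" by simp
      define s2 where "s2 = bf d S w w"
      have s2p: "s2 > 0" unfolding s2_def by (rule pd_bf_pos[OF pd wk])
      have PL: "distr G (lborel \<Otimes>\<^sub>M lborel) (\<lambda>x. (dot d r x, dot d w x)) =
         density lborel (normal_density (dot d r \<mu>) (sqrt s1)) \<Otimes>\<^sub>M
         density lborel (normal_density (dot d w \<mu>) (sqrt s2))"
        unfolding G_def s1_def s2_def by (rule pair_law[OF sym pd rk wk orth])
      define F where "F = {z :: real \<times> real. \<bar>fst z + c\<bar> \<le> \<bar>\<beta> * fst z + snd z\<bar>}"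
      have Fs: "F \<in> sets (lborel \<Otimes>\<^sub>M lborel)"
      proof -
        have "Measurable.pred (lborel \<Otimes>\<^sub>M lborel) (\<lambda>z::real\<times>real. \<bar>fst z + c\<bar> \<le> \<bar>\<beta> * fst z + snd z\<bar>)"
          by measurable
        moreover have "F = {z \<in> space (lborel \<Otimes>\<^sub>M lborel). \<bar>fst z + c\<bar> \<le> \<bar>\<beta> * fst z + snd z\<bar>}"
          by (auto simp: F_def space_pair_measure)
        ultimately show ?thesis by (simp add: pred_def)
      qed
      have dv: "dot d v x = \<beta> * dot d r x + dot d w x" for x
        by (subst vdec) (simp add: dot_def sum.distrib sum_distrib_left algebra_simps)
      have phim: "(\<lambda>x. (dot d r x, dot d w x)) \<in> measurable G (lborel \<Otimes>\<^sub>M lborel)"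
      proof -
        have "(\<lambda>x. (dot d r x, dot d w x)) \<in> measurable (lebesgue_d d) (lborel \<Otimes>\<^sub>M lborel)"
          unfolding dot_def by (intro measurable_Pair) (simp_all add: lin_meas)
        then show ?thesis unfolding G_def gaussian_def by simp
      qed
      have sub: "Ev \<subseteq> (\<lambda>x. (dot d r x, dot d w x)) -` F \<inter> space G"
      proof
        fix x assume "x \<in> Ev"
        then have x: "x \<in> space G" "pos (dot d r x + c) \<noteq> pos (dot d rh x + c)" unfolding Ev_def by auto
        have "\<bar>dot d r x + c\<bar> \<le> \<bar>(dot d r x + c) - (dot d rh x + c)\<bar>" by (rule pos_disagree[OF x(2)])
        also have "(dot d r x + c) - (dot d rh x + c) = dot d v x" unfolding v_def dot_split by simp
        also have "\<dots> = \<beta> * dot d r x + dot d w x" by (rule dv)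
        finally show "x \<in> (\<lambda>x. (dot d r x, dot d w x)) -` F \<inter> space G" using x(1) by (simp add: F_def)
      qed
      have "measure G Ev \<le> measure G ((\<lambda>x. (dot d r x, dot d w x)) -` F \<inter> space G)"
        by (rule G.finite_measure_mono[OF sub]) (rule measurable_sets[OF phim Fs])
      also have "\<dots> = measure (distr G (lborel \<Otimes>\<^sub>M lborel) (\<lambda>x. (dot d r x, dot d w x))) F"
        by (rule measure_distr[OF phim Fs, symmetric])
      also have "\<dots> \<le> 8 * \<bar>\<beta>\<bar> + 4 * (\<bar>\<beta> * dot d r \<mu> + dot d w \<mu>\<bar> + sqrt s2) / sqrt s1"
        unfolding PL F_def by (rule pair_bound) (use s1p s2p in auto)
      also have "\<dots> \<le> RHS"
      proof -
        define bvv where "bvv = bf d S v v"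
        have bvv_le: "bvv \<le> lmax * \<epsilon>1^2"
        proof -
          have "bvv \<le> lmax * sq d v" unfolding bvv_def by (rule sp(4))
          also have "\<dots> \<le> lmax * \<epsilon>1^2" using sqv lmin by (intro mult_left_mono) auto
          finally show ?thesis .
        qed
        have bvv0: "bvv \<ge> 0" unfolding bvv_def by (rule psd_of_pd[OF pd])
        have sbvv: "sqrt bvv \<le> sqrt lmax * \<epsilon>1"
        proof -
          have "sqrt bvv \<le> sqrt (lmax * \<epsilon>1^2)" using bvv_le by (rule real_sqrt_le_mono)
          also have "\<dots> = sqrt lmax * \<epsilon>1" using e0 by (simp add: real_sqrt_mult)
          finally show ?thesis .
        qed
        have cs: "(bf d S r v)^2 \<le> s1 * bvv"
          unfolding s1_def bvv_def by (rule psd_cs[OF sym psd_of_pd[OF pd]])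
        have ss1: "sqrt s1 \<ge> sqrt lmin" using s1b by simp
        have sl: "sqrt lmin > 0" using lmin by simp
        have b1: "\<bar>\<beta>\<bar> \<le> \<epsilon>1 * \<kappa>"
        proof -
          have "\<bar>bf d S r v\<bar> \<le> sqrt (s1 * bvv)"
            using real_sqrt_le_mono[OF cs] by simp
          then have "\<bar>\<beta>\<bar> \<le> sqrt (s1 * bvv) / s1" unfolding \<beta>_def using s1p
            by (simp add: abs_divide divide_right_mono)
          also have "sqrt (s1 * bvv) / s1 = sqrt bvv / sqrt s1"
            using s1p by (simp add: real_sqrt_mult field_simps)
          also have "\<dots> \<le> sqrt bvv / sqrt lmin" using ss1 sl bvv0 by (intro divide_left_mono) auto
          also have "\<dots> \<le> sqrt lmax * \<epsilon>1 / sqrt lmin" using sbvv sl by (intro divide_right_mono) auto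
          also have "\<dots> = \<epsilon>1 * \<kappa>" unfolding kappa by simp
          finally show ?thesis .
        qed
        have s2le: "s2 \<le> bvv"
        proof -
          have "bvv = bf d S (\<lambda>i. \<beta> * r i + 1 * w i) (\<lambda>i. \<beta> * r i + 1 * w i)" unfolding bvv_def by (simp only: vdec[symmetric])
          also have "\<dots> = \<beta> * (\<beta> * s1 + bf d S r w) + (\<beta> * bf d S w r + s2)"
            unfolding bf_lin_left bf_lin_right s1_def s2_def by simp
          also have "bf d S w r = 0" using bf_sym[OF sym, of w r] orth by simp
          finally have "bvv = \<beta>^2 * s1 + s2" using orth by (simp add: power2_eq_square)
          moreover have "\<beta>^2 * s1 \<ge> 0" using s1p by simp
          ultimately show ?thesis by simp
        qed
        have b2: "sqrt s2 \<le> sqrt lmax * \<epsilon>1" by (rule order_trans[OF real_sqrt_le_mono[OF s2le] sbvv])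
        have b3: "\<bar>\<beta> * dot d r \<mu> + dot d w \<mu>\<bar> \<le> \<epsilon>1 * vnorm d \<mu>"
        proof -
          have "\<beta> * dot d r \<mu> + dot d w \<mu> = dot d v \<mu>" by (rule dv[symmetric])
          also have "\<bar>\<dots>\<bar> \<le> vnorm d v * vnorm d \<mu>" by (rule dot_cs)
          also have "\<dots> \<le> \<epsilon>1 * vnorm d \<mu>" using eps nmu unfolding v_def by (intro mult_right_mono) auto
          finally show ?thesis .
        qed
        have X0: "\<bar>\<beta> * dot d r \<mu> + dot d w \<mu>\<bar> + sqrt s2 \<ge> 0" using s2p by (simp add: add_nonneg_nonneg)
        have "4 * (\<bar>\<beta> * dot d r \<mu> + dot d w \<mu>\<bar> + sqrt s2) / sqrt s1
            \<le> 4 * (\<bar>\<beta> * dot d r \<mu> + dot d w \<mu>\<bar> + sqrt s2) / sqrt lmin"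
          using ss1 sl X0 by (intro divide_left_mono) auto
        also have "\<dots> \<le> 4 * (\<epsilon>1 * vnorm d \<mu> + sqrt lmax * \<epsilon>1) / sqrt lmin"
          using b2 b3 sl by (intro divide_right_mono) auto
        also have "\<dots> = 4 * \<epsilon>1 * vnorm d \<mu> / sqrt lmin + 4 * (\<epsilon>1 * \<kappa>)"
          unfolding kappa using sl by (simp add: field_simps)
        finally have t2: "4 * (\<bar>\<beta> * dot d r \<mu> + dot d w \<mu>\<bar> + sqrt s2) / sqrt s1 \<le> 4 * \<epsilon>1 * vnorm d \<mu> / sqrt lmin + 4 * (\<epsilon>1 * \<kappa>)" .
        have "RHS = 8 * (\<epsilon>1 * \<kappa>) + (4 * \<epsilon>1 * vnorm d \<mu> / sqrt lmin + 4 * (\<epsilon>1 * \<kappa>))"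
          unfolding RHS_def by (simp add: field_simps)
        then show ?thesis using t2 b1 by linarith
      qed
      finally show ?thesis .
    qed
  qed
  then show ?thesis unfolding G_def Ev_def RHS_def \<kappa>_def lmin_def lmax_def .
qed


theorem lemma2:
  shows "\<exists>c0>0. \<exists>c1>0. \<forall>(d::nat) (\<mu>::nat \<Rightarrow> real) (\<Sigma>::nat \<Rightarrow> nat \<Rightarrow> real)
            (c::real) (r::nat \<Rightarrow> real) (rh::nat \<Rightarrow> real) (\<epsilon>1::real).
     d \<ge> 1 \<longrightarrow> symmetric_mat d \<Sigma> \<longrightarrow> pos_def_mat d \<Sigma> \<longrightarrow>
     vnorm d r = 1 \<longrightarrow> vnorm d rh = 1 \<longrightarrow>
     vnorm d (\<lambda>i. r i - rh i) \<le> \<epsilon>1 \<longrightarrow>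
     measure (gaussian d \<mu> \<Sigma>)
        {x \<in> space (gaussian d \<mu> \<Sigma>). pos (dot d r x + c) \<noteq> pos (dot d rh x + c)}
     \<le> \<epsilon>1 * (c0 * sqrt (lambda_max d \<Sigma> / lambda_min d \<Sigma>)
               + c1 * vnorm d \<mu> / sqrt (lambda_min d \<Sigma>))"
    apply (rule exI[of _ "12::real"])
  apply (rule conjI)
   apply simp
  apply (rule exI[of _ "4::real"])
  apply (rule conjI)
   apply simp
  apply (intro allI impI)
  apply (rule main_bound)
       apply assumption+
  done

end
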